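(* For every finite nonempty subset $C \subset \mathbb N_{\ge 2}$ there is a finitely generated Krull monoid $H$ with finite class group such that $\mathcal R(H) = \operatorname{Ca}(H) = C$ and $\daleth^*(H) = C\setminus\{2\}$.
   Context: A monoid is a commutative cancellative semigroup with identity; $\mathcal A(H)$ denotes its atoms, $H_{\mathrm{red}}=H/H^\times$. For $a\in H$, $\mathsf Z(a)$ is the set of factorizations of $a$ (elements of the free abelian monoid on $\mathcal A(H_{\mathrm{red}})$ multiplying to $aH^\times$), $|z|$ is the number of atoms in $z$, and $\mathsf L(a)=\{|z|: z\in\mathsf Z(a)\}$. $\daleth^*(H) = \{\min(\mathsf L(uv)\setminus\{2\}) : u,v \in \mathcal A(H),\ |\mathsf L(uv)|>1\}$. Distance: writing $z = u_1\cdots u_k v_1\cdots v_\ell$, $z'=u_1\cdots u_k w_1\cdots w_m$ with no $v_i$ equal to any $w_j$, $\mathsf d(z,z')=\max\{\ell,m\}$. An $N$-chain from $z$ to $z'$ in $\mathsf Z(a)$ is a sequence $z=z_0,\dots,z_n=z'$ in $\mathsf Z(a)$ with $\mathsf d(z_{i-1},z_i)\le N$. $\mathsf c(a)$ is the least $N$ such that any two factorizations of $a$ are connected by an $N$-chain; $\operatorname{Ca}(H)=\{\mathsf c(a): a\in H,\ |\mathsf Z(a)|>1\}$. $\mathcal R(H)$ is the set of $d\in\mathbb N_{\ge2}$ such that some $a\in H$ has distinct $z,z'\in\mathsf Z(a)$ with $\mathsf d(z,z')=d$ not connected by any $(d-1)$-chain. A Krull monoid is a monoid $H$ admitting a divisor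 theory $H_{\mathrm{red}}\hookrightarrow\mathcal F(P)$ into a free abelian monoid (a divisor homomorphism such that every element of $\mathcal F(P)$ is a gcd of finitely many elements of $H_{\mathrm{red}}$); its class group is $\mathsf q(\mathcal F(P))/\mathsf q(H_{\mathrm{red}})$. *)

theory Defs
  imports "HOL-Algebra.Divisibility" "HOL-Library.Multiset"
begin

text \<open>A factorization of a
  is the multiset of associate classes of a list of atoms whose product is
  associated to a; this is an element of the free abelian monoid on the atoms of G_red.\<close>

definition atoms :: "('a, 'b) monoid_scheme \<Rightarrow> 'a set" where
  "atoms G = {u \<in> carrier G. irreducible G u}"

definition Zs :: "('a, 'b) monoid_scheme \<Rightarrow> 'a \<Rightarrow> 'a set multiset set" where
  "Zs G a = {fmset G fs | fs. set fs \<subseteq> carrier G \<and> wfactors G fs a}"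

definition Ls :: "('a, 'b) monoid_scheme \<Rightarrow> 'a \<Rightarrow> nat set" where
  "Ls G a = size ` Zs G a"

text \<open>Distance: after removing the common part (gcd), the maximum of the remaining lengths.\<close>
definition fdist :: "'c multiset \<Rightarrow> 'c multiset \<Rightarrow> nat" where
  "fdist z z' = max (size (z - z')) (size (z' - z))"

definition is_chain :: "('a, 'b) monoid_scheme \<Rightarrow> 'a \<Rightarrow> nat \<Rightarrow> 'a set multiset \<Rightarrow> 'a set multiset \<Rightarrow> bool" where
  "is_chain G a N z z' \<longleftrightarrow> (\<exists>zs. zs \<noteq> [] \<and> hd zs = z \<and> last zs = z' \<and> set zs \<subseteq> Zs G a \<and>
      (\<forall>i. Suc i < length zs \<longrightarrow> fdist (zs ! i) (zs ! Suc i) \<le> N))"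

definition all_chained :: "('a, 'b) monoid_scheme \<Rightarrow> 'a \<Rightarrow> nat \<Rightarrow> bool" where
  "all_chained G a N \<longleftrightarrow> (\<forall>z\<in>Zs G a. \<forall>z'\<in>Zs G a. is_chain G a N z z')"

definition is_catenary_degree :: "('a, 'b) monoid_scheme \<Rightarrow> 'a \<Rightarrow> nat \<Rightarrow> bool" where
  "is_catenary_degree G a N \<longleftrightarrow> all_chained G a N \<and> (\<forall>M<N. \<not> all_chained G a M)"

definition Ca :: "('a, 'b) monoid_scheme \<Rightarrow> nat set" where
  "Ca G = {N. \<exists>a\<in>carrier G. (\<exists>z\<in>Zs G a. \<exists>z'\<in>Zs G a. z \<noteq> z') \<and> is_catenary_degree G a N}"

definition Rset :: "('a, 'b) monoid_scheme \<Rightarrow> nat set" where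
  "Rset G = {d. d \<ge> 2 \<and> (\<exists>a\<in>carrier G. \<exists>z\<in>Zs G a. \<exists>z'\<in>Zs G a. z \<noteq> z' \<and>
      fdist z z' = d \<and> \<not> is_chain G a (d - 1) z z')}"

definition daleth_star :: "('a, 'b) monoid_scheme \<Rightarrow> nat set" where
  "daleth_star G = {Inf (Ls G (u \<otimes>\<^bsub>G\<^esub> v) - {2}) | u v. u \<in> atoms G \<and> v \<in> atoms G \<and>
      (\<exists>l\<in>Ls G (u \<otimes>\<^bsub>G\<^esub> v). \<exists>l'\<in>Ls G (u \<otimes>\<^bsub>G\<^esub> v). l \<noteq> l')}"

definition finitely_generated :: "('a, 'b) monoid_scheme \<Rightarrow> bool" where
  "finitely_generated G \<longleftrightarrow> (\<exists>E. finite E \<and> E \<subseteq> carrier G \<and>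
      (\<forall>a\<in>carrier G. \<exists>es. set es \<subseteq> E \<and> a = foldr (\<otimes>\<^bsub>G\<^esub>) es \<one>\<^bsub>G\<^esub>))"

text \<open>phi : H \<rightarrow> F(P) (free abelian monoid F(P) = multisets supported in P).
  A monoid homomorphism H \<rightarrow> F(P) is the same as one H_red \<rightarrow> F(P).\<close>
definition divisor_theory :: "('a, 'b) monoid_scheme \<Rightarrow> 'p set \<Rightarrow> ('a \<Rightarrow> 'p multiset) \<Rightarrow> bool" where
  "divisor_theory G P \<phi> \<longleftrightarrow>
     \<phi> \<one>\<^bsub>G\<^esub> = {#} \<and>
     (\<forall>a\<in>carrier G. \<forall>b\<in>carrier G. \<phi> (a \<otimes>\<^bsub>G\<^esub> b) = \<phi> a + \<phi> b) \<and>
     (\<forall>a\<in>carrier G. set_mset (\<phi> a) \<subseteq> P) \<and>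
     (\<forall>a\<in>carrier G. \<forall>b\<in>carrier G. \<phi> a \<subseteq># \<phi> b \<longrightarrow> a divides\<^bsub>G\<^esub> b) \<and>
     (\<forall>m. set_mset m \<subseteq> P \<longrightarrow> (\<exists>A. finite A \<and> A \<noteq> {} \<and> A \<subseteq> carrier G \<and>
         (\<forall>a\<in>A. m \<subseteq># \<phi> a) \<and> (\<forall>m'. (\<forall>a\<in>A. m' \<subseteq># \<phi> a) \<longrightarrow> m' \<subseteq># m)))"

text \<open>Class group q(F(P))/q(phi(H)): elements of q(F(P)) are represented by pairs (x,y)
  (standing for x - y); two pairs are identified iff their difference lies in q(phi(H)).\<close>
definition class_rel :: "('a, 'b) monoid_scheme \<Rightarrow> 'p set \<Rightarrow> ('a \<Rightarrow> 'p multiset) \<Rightarrow>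
    ('p multiset \<times> 'p multiset) rel" where
  "class_rel G P \<phi> = {((x, y), (x', y')). set_mset x \<subseteq> P \<and> set_mset y \<subseteq> P \<and>
      set_mset x' \<subseteq> P \<and> set_mset y' \<subseteq> P \<and>
      (\<exists>a\<in>carrier G. \<exists>b\<in>carrier G. x + y' + \<phi> b = x' + y + \<phi> a)}"

definition class_group :: "('a, 'b) monoid_scheme \<Rightarrow> 'p set \<Rightarrow> ('a \<Rightarrow> 'p multiset) \<Rightarrow>
    ('p multiset \<times> 'p multiset) set set" where
  "class_group G P \<phi> = {(x, y). set_mset x \<subseteq> P \<and> set_mset y \<subseteq> P} // class_rel G P \<phi>"

definition krull_monoid_via :: "('a, 'b) monoid_scheme \<Rightarrow> 'p set \<Rightarrow> ('a \<Rightarrow> 'p multiset) \<Rightarrow> bool" where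
  "krull_monoid_via G P \<phi> \<longleftrightarrow> comm_monoid_cancel G \<and> divisor_theory G P \<phi>"

end

theory Submission
  imports Defs "HOL-Library.Countable"
begin

definition enc :: "nat multiset \<Rightarrow> nat" where
  "enc m = to_nat (sorted_list_of_multiset m)"
definition dec :: "nat \<Rightarrow> nat multiset" where
  "dec n = mset (from_nat n :: nat list)"

lemma dec_enc[simp]: "dec (enc m) = m"
  by (simp add: enc_def dec_def)

lemma enc_inj: "enc m = enc n \<Longrightarrow> m = n"
  by (metis dec_enc)

definition PP :: "nat set \<Rightarrow> nat set" where
  "PP C = {q. \<exists>d\<in>C. q = 2*d \<or> q = 2*d+1}"

definition SS :: "nat set \<Rightarrow> nat multiset set" where
  "SS C = {m. set_mset m \<subseteq> PP C \<and> (\<forall>d\<in>C. count m (2*d) mod d = count m (2*d+1) mod d)}"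

definition HH :: "nat set \<Rightarrow> nat monoid" where
  "HH C = \<lparr>carrier = enc ` SS C, mult = (\<lambda>a b. enc (dec a + dec b)), one = enc {#}\<rparr>"

lemma SS_add: "m \<in> SS C \<Longrightarrow> n \<in> SS C \<Longrightarrow> m + n \<in> SS C"
  unfolding SS_def by (auto intro: mod_add_cong)

lemma SS_empty: "{#} \<in> SS C"
  unfolding SS_def by auto

lemma mod_diff_aux:
  fixes a a' b b' d :: nat
  assumes "a mod d = b mod d" "a' mod d = b' mod d" "a' \<le> a" "b' \<le> b"
  shows "(a - a') mod d = (b - b') mod d"
proof -
  have "int a mod int d = int b mod int d" "int a' mod int d = int b' mod int d"
    using assms(1,2) by (metis of_nat_mod)+
  hence "(int a - int a') mod int d = (int b - int b') mod int d"
    by (metis mod_diff_cong)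
  hence "int (a - a') mod int d = int (b - b') mod int d"
    using assms(3,4) by (simp add: of_nat_diff)
  thus ?thesis by (metis of_nat_mod of_nat_eq_iff)
qed

lemma SS_diff: "m \<in> SS C \<Longrightarrow> n \<in> SS C \<Longrightarrow> m \<subseteq># n \<Longrightarrow> n - m \<in> SS C"
proof -
  assume a: "m \<in> SS C" "n \<in> SS C" "m \<subseteq># n"
  have "set_mset (n - m) \<subseteq> PP C" using a(2) unfolding SS_def
    by (metis (no_types, lifting) in_diffD mem_Collect_eq subsetD subsetI)
  moreover have "\<forall>d\<in>C. count (n - m) (2 * d) mod d = count (n - m) (2 * d + 1) mod d"
  proof
    fix d assume d: "d \<in> C"
    have 1: "count m (2*d) mod d = count m (2*d+1) mod d" and 2: "count n (2*d) mod d = count n (2*d+1) mod d"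
      using a(1,2) d unfolding SS_def by auto
    have 3: "count m (2*d) \<le> count n (2*d)" and 4: "count m (2*d+1) \<le> count n (2*d+1)"
      using a(3) by (auto simp: mset_subset_eq_count)
    show "count (n - m) (2 * d) mod d = count (n - m) (2 * d + 1) mod d"
      unfolding count_diff by (rule mod_diff_aux[OF 2 1 3 4])
  qed
  ultimately show ?thesis unfolding SS_def by blast
qed

lemma carrier_HH: "carrier (HH C) = enc ` SS C" by (simp add: HH_def)
lemma mult_HH: "x \<otimes>\<^bsub>HH C\<^esub> y = enc (dec x + dec y)" by (simp add: HH_def)
lemma one_HH: "\<one>\<^bsub>HH C\<^esub> = enc {#}" by (simp add: HH_def)

lemma carrier_HH_iff: "x \<in> carrier (HH C) \<longleftrightarrow> dec x \<in> SS C \<and> x = enc (dec x)"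
  by (auto simp: carrier_HH)

lemma HH_cancel: "comm_monoid_cancel (HH C)"
proof (rule comm_monoid_cancelI)
  show "comm_monoid (HH C)"
    by (rule comm_monoidI) (auto simp: carrier_HH mult_HH one_HH SS_add SS_empty ac_simps)
next
  fix a b c assume "a \<otimes>\<^bsub>HH C\<^esub> c = b \<otimes>\<^bsub>HH C\<^esub> c" "a \<in> carrier (HH C)" "b \<in> carrier (HH C)" "c \<in> carrier (HH C)"
  thus "a = b" by (auto simp: carrier_HH mult_HH dest!: enc_inj)
qed

lemma dec_mult: "dec (x \<otimes>\<^bsub>HH C\<^esub> y) = dec x + dec y" by (simp add: mult_HH)

lemma divides_HH:
  assumes "a \<in> carrier (HH C)" "b \<in> carrier (HH C)"
  shows "a divides\<^bsub>HH C\<^esub> b \<longleftrightarrow> dec a \<subseteq># dec b"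
proof
  assume "a divides\<^bsub>HH C\<^esub> b"
  then obtain c where "c \<in> carrier (HH C)" "b = a \<otimes>\<^bsub>HH C\<^esub> c" unfolding factor_def by blast
  thus "dec a \<subseteq># dec b" by (simp add: dec_mult)
next
  assume s: "dec a \<subseteq># dec b"
  have "dec b - dec a \<in> SS C" using assms s by (simp add: carrier_HH_iff SS_diff)
  hence "enc (dec b - dec a) \<in> carrier (HH C)" by (simp add: carrier_HH)
  moreover have "b = a \<otimes>\<^bsub>HH C\<^esub> enc (dec b - dec a)"
    using s assms by (simp add: mult_HH carrier_HH_iff)
  ultimately show "a divides\<^bsub>HH C\<^esub> b" unfolding factor_def by blast
qed

lemma carrier_eqI: "a \<in> carrier (HH C) \<Longrightarrow> b \<in> carrier (HH C) \<Longrightarrow> dec a = dec b \<Longrightarrow> a = b"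
  by (metis carrier_HH_iff)

lemma assoc_HH:
  assumes "a \<in> carrier (HH C)" "b \<in> carrier (HH C)"
  shows "a \<sim>\<^bsub>HH C\<^esub> b \<longleftrightarrow> a = b"
  using assms by (auto simp: associated_def divides_HH intro: carrier_eqI subset_mset.antisym)

lemma assocs_HH:
  assumes "x \<in> carrier (HH C)"
  shows "assocs (HH C) x = {x}"
  using assms by (auto simp: eq_closure_of_def elem_def assoc_HH)

lemma Units_HH: "Units (HH C) = {enc {#}}"
  by (auto simp: Units_def carrier_HH mult_HH one_HH SS_empty dest!: enc_inj)

lemma irreducible_HH:
  assumes "a \<in> carrier (HH C)"
  shows "irreducible (HH C) a \<longleftrightarrow> dec a \<noteq> {#} \<and> (\<forall>m\<in>SS C. m \<subset># dec a \<longrightarrow> m = {#})"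
proof -
  have u: "x \<in> Units (HH C) \<longleftrightarrow> dec x = {#}" if "x \<in> carrier (HH C)" for x
    using that by (auto simp: Units_HH carrier_HH)
  have pf: "properfactor (HH C) b a \<longleftrightarrow> dec b \<subset># dec a" if "b \<in> carrier (HH C)" for b
    using that assms by (auto simp: properfactor_def divides_HH subset_mset.less_le_not_le)
  show ?thesis
    unfolding irreducible_def
  proof (intro iffI conjI ballI impI; (elim conjE)?)
    assume "a \<notin> Units (HH C)" thus "dec a \<noteq> {#}" using u assms by blast
  next
    fix m assume h: "\<forall>b\<in>carrier (HH C). properfactor (HH C) b a \<longrightarrow> b \<in> Units (HH C)"
      and m: "m \<in> SS C" "m \<subset># dec a"
    have "enc m \<in> carrier (HH C)" using m by (simp add: carrier_HH)
    thus "m = {#}" using h m pf u by fastforce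
  next
    assume "dec a \<noteq> {#}" thus "a \<notin> Units (HH C)" using u assms by blast
  next
    fix b assume h: "\<forall>m\<in>SS C. m \<subset># dec a \<longrightarrow> m = {#}" and b: "b \<in> carrier (HH C)"
      "properfactor (HH C) b a"
    thus "b \<in> Units (HH C)" using pf u by (simp add: carrier_HH_iff)
  qed
qed

datatype code = X nat | Y nat | W nat

fun atm :: "code \<Rightarrow> nat multiset" where
  "atm (X d) = replicate_mset d (2*d)"
| "atm (Y d) = replicate_mset d (2*d+1)"
| "atm (W d) = {#2*d, 2*d+1#}"

definition Codes :: "nat set \<Rightarrow> code set" where
  "Codes C = {c. \<exists>d\<in>C. c = X d \<or> c = Y d \<or> c = W d}"

definition val :: "code multiset \<Rightarrow> nat multiset" where
  "val Z = sum_mset (image_mset atm Z)"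

definition Fact :: "nat set \<Rightarrow> nat multiset \<Rightarrow> code multiset set" where
  "Fact C e = {Z. set_mset Z \<subseteq> Codes C \<and> val Z = e}"

lemma parity_ne[simp]: "(2*(a::nat) = Suc (2*b)) = False" "(Suc (2*b) = 2*a) = False"
  by presburger+

lemma val_empty[simp]: "val {#} = {#}" by (simp add: val_def)
lemma val_add_mset[simp]: "val (add_mset c Z) = atm c + val Z" by (simp add: val_def)
lemma val_plus[simp]: "val (Z + Z') = val Z + val Z'" by (simp add: val_def)

lemma count_val_x: "count (val Z) (2*d) = d * count Z (X d) + count Z (W d)"
proof (induction Z)
  case empty thus ?case by simp
next
  case (add c Z) thus ?case by (cases c) auto
qed

lemma count_val_y: "count (val Z) (2*d+1) = d * count Z (Y d) + count Z (W d)"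
proof (induction Z)
  case empty thus ?case by simp
next
  case (add c Z) thus ?case by (cases c) auto
qed

lemma Codes_iff: "c \<in> Codes C \<longleftrightarrow> (case c of X d \<Rightarrow> d \<in> C | Y d \<Rightarrow> d \<in> C | W d \<Rightarrow> d \<in> C)"
  by (cases c) (auto simp: Codes_def)

lemma count_atm: "count (atm c) q = (case c of X d \<Rightarrow> if q = 2*d then d else 0
   | Y d \<Rightarrow> if q = 2*d+1 then d else 0 | W d \<Rightarrow> (if q = 2*d \<or> q = 2*d+1 then 1 else 0))"
  by (cases c) auto

lemma atm_SS: "c \<in> Codes C \<Longrightarrow> atm c \<in> SS C"
  by (cases c) (auto simp: Codes_def SS_def PP_def)

lemma val_SS: "set_mset Z \<subseteq> Codes C \<Longrightarrow> val Z \<in> SS C"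
proof (induction Z)
  case empty thus ?case by (simp add: SS_empty)
next
  case (add c Z) thus ?case by (simp add: SS_add atm_SS)
qed

lemma atm_inj: "atm c = atm c' \<Longrightarrow> c \<in> Codes C \<Longrightarrow> c' \<in> Codes C \<Longrightarrow> C \<subseteq> {2..} \<Longrightarrow> c = c'"
proof -
  assume e: "atm c = atm c'" and cc: "c \<in> Codes C" "c' \<in> Codes C" and C2: "C \<subseteq> {2..}"
  have "set_mset (atm c) = set_mset (atm c')" using e by simp
  moreover have pos: "\<And>d. d \<in> C \<Longrightarrow> d \<noteq> 0" using C2 by auto
  ultimately show "c = c'" using cc
    by (cases c; cases c') (auto simp: Codes_def dest!: pos; presburger)+
qed

lemma exists_atom:
  assumes "e \<in> SS C" "e \<noteq> {#}"
  shows "\<exists>c\<in>Codes C. atm c \<subseteq># e"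
proof -
  obtain q where q: "q \<in># e" using assms(2) by blast
  then obtain d where d: "d \<in> C" "q = 2*d \<or> q = 2*d+1" using assms(1) by (auto simp: SS_def PP_def)
  have md: "count e (2*d) mod d = count e (2*d+1) mod d" using assms(1) d(1) by (auto simp: SS_def)
  show ?thesis
  proof (cases "count e (2*d) \<ge> 1 \<and> count e (2*d+1) \<ge> 1")
    case True
    have "atm (W d) \<subseteq># e" using True by (auto simp: subseteq_mset_def count_atm)
    thus ?thesis using d by (auto simp: Codes_def)
  next
    case F: False
    show ?thesis
    proof (cases "count e (2*d) \<ge> d")
      case True
      have "atm (X d) \<subseteq># e" using True by (auto simp: subseteq_mset_def count_atm)
      thus ?thesis using d by (auto simp: Codes_def)
    next
      case F2: False
      show ?thesis
      proof (cases "count e (2*d+1) \<ge> d")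
        case True
        have "atm (Y d) \<subseteq># e" using True by (auto simp: subseteq_mset_def count_atm)
        thus ?thesis using d by (auto simp: Codes_def)
      next
        case F3: False
        have A: "count e (2*d) = count e (2*d+1)" using md F2 F3 by simp
        have B: "count e q \<ge> 1" using q by simp
        have "1 \<le> count e (2*d) \<or> 1 \<le> count e (2*d+1)" using B d(2) by auto
        hence "1 \<le> count e (2*d) \<and> 1 \<le> count e (2*d+1)" using A by linarith
        hence False using F by blast
        thus ?thesis ..
      qed
    qed
  qed
qed

lemma atm_nonempty: "c \<in> Codes C \<Longrightarrow> C \<subseteq> {2..} \<Longrightarrow> atm c \<noteq> {#}"
proof -
  assume a: "c \<in> Codes C" "C \<subseteq> {2..}"
  then obtain d where d: "d \<in> C" "c = X d \<or> c = Y d \<or> c = W d" by (auto simp: Codes_def)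
  have "d \<noteq> 0" using d(1) a(2) by auto
  thus ?thesis using d(2) by auto
qed

lemma exists_fact:
  assumes "e \<in> SS C" and C2: "C \<subseteq> {2..}"
  shows "\<exists>Z. Z \<in> Fact C e"
  using assms
proof (induction "size e" arbitrary: e rule: less_induct)
  case less
  show ?case
  proof (cases "e = {#}")
    case True thus ?thesis by (rule_tac x="{#}" in exI) (simp add: Fact_def)
  next
    case False
    then obtain c where c: "c \<in> Codes C" "atm c \<subseteq># e" using exists_atom less.prems by blast
    have "e - atm c \<in> SS C" using SS_diff[OF atm_SS[OF c(1)] less.prems(1) c(2)] .
    moreover have "atm c \<noteq> {#}" using c(1) C2 by (rule atm_nonempty)
    hence "size (e - atm c) < size e" using c(2)
    proof -
      have "size (atm c) > 0" using \<open>atm c \<noteq> {#}\<close> by (simp add: nonempty_has_size)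
      moreover have "size (atm c) \<le> size e" using c(2) by (rule size_mset_mono)
      ultimately show ?thesis using c(2) by (simp add: size_Diff_submset)
    qed
    ultimately obtain Z where "Z \<in> Fact C (e - atm c)" using less by blast
    hence "add_mset c Z \<in> Fact C e" using c by (auto simp: Fact_def subset_mset.add_diff_inverse)
    thus ?thesis by blast
  qed
qed

lemma atm_minimal:
  assumes c: "c \<in> Codes C" and C2: "C \<subseteq> {2..}" and m: "m \<in> SS C" "m \<subseteq># atm c"
  shows "m = {#} \<or> m = atm c"
proof -
  obtain d where d: "d \<in> C" "c = X d \<or> c = Y d \<or> c = W d" using c by (auto simp: Codes_def)
  have d2: "d \<ge> 2" using d(1) C2 by auto
  have le: "\<And>x. count m x \<le> count (atm c) x" using m(2) by (simp add: subseteq_mset_def)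
  have md: "count m (2*d) mod d = count m (2*d+1) mod d" using m(1) d(1) by (auto simp: SS_def)
  have zero: "\<And>x. count (atm c) x = 0 \<Longrightarrow> count m x = 0" using le by (metis le_zero_eq)
  show ?thesis
  proof (cases "c = W d")
    case True
    have k1: "count m (2*d) \<le> 1" and k2: "count m (2*d+1) \<le> 1" using le[of "2*d"] le[of "2*d+1"] True by auto
    hence "count m (2*d) mod d = count m (2*d)" "count m (2*d+1) mod d = count m (2*d+1)" using d2 by auto
    hence eq: "count m (2*d) = count m (2*d+1)" using md by simp
    show ?thesis
    proof (cases "count m (2*d) = 0")
      case z: True
      have "m = {#}"
      proof (rule multiset_eqI)
        fix x show "count m x = count {#} x"
          using zero[of x] z eq True by (cases "x = 2*d \<or> x = 2*d+1") auto
      qed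
      thus ?thesis ..
    next
      case nz: False
      hence o: "count m (2*d) = 1" "count m (2*d+1) = 1" using k1 eq by linarith+
      have "m = atm c"
      proof (rule multiset_eqI)
        fix x show "count m x = count (atm c) x"
          using zero[of x] o True by (cases "x = 2*d \<or> x = 2*d+1") auto
      qed
      thus ?thesis ..
    qed
  next
    case nW: False
    then obtain q r where qr: "atm c = replicate_mset d q" "r \<noteq> q" "count m r = 0"
      "count m q mod d = count m r mod d"
    proof (cases "c = X d")
      case True
      thus ?thesis using that[of "2*d" "2*d+1"] zero[of "2*d+1"] md by simp
    next
      case False
      hence "c = Y d" using nW d(2) by auto
      thus ?thesis using that[of "2*d+1" "2*d"] zero[of "2*d"] md by simp
    qed
    have kq: "count m q \<le> d" using le[of q] qr(1) by simp
    have "count m q mod d = 0" using qr(3,4) by simp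
    hence "count m q = 0 \<or> count m q = d" using kq
      by (metis le_neq_implies_less mod_less)
    thus ?thesis
    proof
      assume z: "count m q = 0"
      have "m = {#}"
      proof (rule multiset_eqI)
        fix x show "count m x = count {#} x" using zero[of x] z qr(1) by (cases "x = q") auto
      qed
      thus ?thesis ..
    next
      assume z: "count m q = d"
      have "m = atm c"
      proof (rule multiset_eqI)
        fix x show "count m x = count (atm c) x" using zero[of x] z qr(1) by (cases "x = q") auto
      qed
      thus ?thesis ..
    qed
  qed
qed

lemma irr_char:
  assumes e: "e \<in> SS C" and C2: "C \<subseteq> {2..}"
  shows "(e \<noteq> {#} \<and> (\<forall>m\<in>SS C. m \<subset># e \<longrightarrow> m = {#})) \<longleftrightarrow> (\<exists>c\<in>Codes C. e = atm c)"
proof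
  assume h: "e \<noteq> {#} \<and> (\<forall>m\<in>SS C. m \<subset># e \<longrightarrow> m = {#})"
  then obtain c where c: "c \<in> Codes C" "atm c \<subseteq># e" using exists_atom e by blast
  have "atm c \<noteq> {#}" using c(1) C2 by (rule atm_nonempty)
  hence "\<not> atm c \<subset># e" using h atm_SS[OF c(1)] by blast
  hence "e = atm c" using c(2) by (simp add: subset_mset.le_less)
  thus "\<exists>c\<in>Codes C. e = atm c" using c(1) by blast
next
  assume "\<exists>c\<in>Codes C. e = atm c"
  then obtain c where c: "c \<in> Codes C" "e = atm c" by blast
  show "e \<noteq> {#} \<and> (\<forall>m\<in>SS C. m \<subset># e \<longrightarrow> m = {#})"
    using atm_nonempty[OF c(1) C2] atm_minimal[OF c(1) C2] c(2)
    by (auto simp: subset_mset.less_le)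
qed

definition encc :: "code \<Rightarrow> nat" where "encc c = enc (atm c)"

definition J :: "code multiset \<Rightarrow> nat set multiset" where
  "J Z = image_mset (\<lambda>c. {encc c}) Z"

lemma encc_carrier: "c \<in> Codes C \<Longrightarrow> encc c \<in> carrier (HH C)"
  by (simp add: encc_def carrier_HH atm_SS)

lemma irreducible_HH':
  assumes "x \<in> carrier (HH C)" "C \<subseteq> {2..}"
  shows "irreducible (HH C) x \<longleftrightarrow> x \<in> encc ` Codes C"
proof -
  have "irreducible (HH C) x \<longleftrightarrow> (\<exists>c\<in>Codes C. dec x = atm c)"
    using irreducible_HH[OF assms(1)] irr_char[of "dec x" C] assms by (simp add: carrier_HH_iff)
  also have "\<dots> \<longleftrightarrow> x \<in> encc ` Codes C"
    using assms(1) by (auto simp: encc_def carrier_HH)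
  finally show ?thesis .
qed

lemma atoms_HH: "C \<subseteq> {2..} \<Longrightarrow> atoms (HH C) = encc ` Codes C"
  unfolding atoms_def using irreducible_HH' encc_carrier by blast

lemma foldr_HH: "foldr (\<otimes>\<^bsub>HH C\<^esub>) fs \<one>\<^bsub>HH C\<^esub> = enc (sum_list (map dec fs))"
  by (induction fs) (auto simp: mult_HH one_HH)

lemma val_mset: "val (mset cs) = sum_list (map atm cs)"
  by (induction cs) auto

lemma list_codes:
  assumes "\<forall>x\<in>set fs. x \<in> encc ` A"
  shows "\<exists>cs. set cs \<subseteq> A \<and> fs = map encc cs"
  using assms
proof (induction fs)
  case Nil thus ?case by auto
next
  case (Cons x fs)
  then obtain cs where "set cs \<subseteq> A" "fs = map encc cs" by auto
  moreover obtain c where "c \<in> A" "x = encc c" using Cons.prems by auto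
  ultimately show ?case by (rule_tac x="c # cs" in exI) auto
qed

lemma Zs_HH:
  assumes a: "a \<in> carrier (HH C)" and C2: "C \<subseteq> {2..}"
  shows "Zs (HH C) a = J ` Fact C (dec a)"
proof
  show "Zs (HH C) a \<subseteq> J ` Fact C (dec a)"
  proof
    fix z assume "z \<in> Zs (HH C) a"
    then obtain fs where fs: "z = fmset (HH C) fs" "set fs \<subseteq> carrier (HH C)" "wfactors (HH C) fs a"
      unfolding Zs_def by blast
    have irr: "\<forall>x\<in>set fs. x \<in> encc ` Codes C"
      using fs(2,3) irreducible_HH'[OF _ C2] unfolding wfactors_def by blast
    then obtain cs where cs: "set cs \<subseteq> Codes C" "fs = map encc cs" using list_codes by blast
    have "sum_list (map dec fs) \<in> SS C"
      using cs by (simp add: o_def encc_def) (metis val_SS val_mset set_mset_mset)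
    hence "foldr (\<otimes>\<^bsub>HH C\<^esub>) fs \<one>\<^bsub>HH C\<^esub> \<in> carrier (HH C)" by (simp add: foldr_HH carrier_HH)
    hence "foldr (\<otimes>\<^bsub>HH C\<^esub>) fs \<one>\<^bsub>HH C\<^esub> = a" using fs(3) a by (simp add: wfactors_def assoc_HH)
    hence "sum_list (map dec fs) = dec a" by (metis foldr_HH dec_enc)
    hence "mset cs \<in> Fact C (dec a)" using cs by (simp add: Fact_def val_mset o_def encc_def)
    moreover have "z = J (mset cs)"
    proof -
      have "\<forall>c\<in>set cs. assocs (HH C) (encc c) = {encc c}" using cs(1) encc_carrier assocs_HH by blast
      thus ?thesis using fs(1) cs by (auto simp: fmset_def J_def intro!: image_mset_cong)
    qed
    ultimately show "z \<in> J ` Fact C (dec a)" by blast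
  qed
next
  show "J ` Fact C (dec a) \<subseteq> Zs (HH C) a"
  proof
    fix z assume "z \<in> J ` Fact C (dec a)"
    then obtain Z where Z: "Z \<in> Fact C (dec a)" "z = J Z" by blast
    obtain cs where cs: "mset cs = Z" using ex_mset by blast
    define fs where "fs = map encc cs"
    have sc: "set cs \<subseteq> Codes C" using Z(1) cs by (auto simp: Fact_def)
    have car: "set fs \<subseteq> carrier (HH C)" using sc encc_carrier by (auto simp: fs_def)
    have irr: "\<forall>x\<in>set fs. irreducible (HH C) x" using sc car irreducible_HH'[OF _ C2] by (auto simp: fs_def)
    have "foldr (\<otimes>\<^bsub>HH C\<^esub>) fs \<one>\<^bsub>HH C\<^esub> = a"
      using Z(1) cs a by (simp add: foldr_HH fs_def o_def encc_def Fact_def flip: val_mset) (simp add: carrier_HH_iff)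
    hence "wfactors (HH C) fs a" using irr a by (simp add: wfactors_def assoc_HH)
    moreover have "z = fmset (HH C) fs"
    proof -
      have "\<forall>c\<in>set cs. assocs (HH C) (encc c) = {encc c}" using sc encc_carrier assocs_HH by blast
      thus ?thesis using Z(2) cs by (auto simp: fmset_def J_def fs_def intro!: image_mset_cong)
    qed
    ultimately show "z \<in> Zs (HH C) a" using car unfolding Zs_def by blast
  qed
qed

definition differ :: "nat \<Rightarrow> code multiset \<Rightarrow> code multiset \<Rightarrow> bool" where
  "differ d Z Z' \<longleftrightarrow> count Z (X d) \<noteq> count Z' (X d) \<or> count Z (Y d) \<noteq> count Z' (Y d) \<or> count Z (W d) \<noteq> count Z' (W d)"

lemma fact_eqs:
  assumes "Z \<in> Fact C e" "Z' \<in> Fact C e"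
  shows "d * count Z (X d) + count Z (W d) = d * count Z' (X d) + count Z' (W d)"
    "d * count Z (Y d) + count Z (W d) = d * count Z' (Y d) + count Z' (W d)"
  using assms count_val_x[of Z d] count_val_x[of Z' d] count_val_y[of Z d] count_val_y[of Z' d]
  by (auto simp: Fact_def)

lemma fact_t:
  assumes "Z \<in> Fact C e" "Z' \<in> Fact C e" "d > 0"
  shows "int (count Z (Y d)) - int (count Z' (Y d)) = int (count Z (X d)) - int (count Z' (X d))"
    "int (count Z' (W d)) = int (count Z (W d)) + int d * (int (count Z (X d)) - int (count Z' (X d)))"
proof -
  have a: "int d * int (count Z (X d)) + int (count Z (W d)) = int d * int (count Z' (X d)) + int (count Z' (W d))"
    using fact_eqs(1)[OF assms(1,2), of d] by (metis of_nat_add of_nat_mult)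
  have b: "int d * int (count Z (Y d)) + int (count Z (W d)) = int d * int (count Z' (Y d)) + int (count Z' (W d))"
    using fact_eqs(2)[OF assms(1,2), of d] by (metis of_nat_add of_nat_mult)
  from a b have "int d * (int (count Z (Y d)) - int (count Z' (Y d))) = int d * (int (count Z (X d)) - int (count Z' (X d)))"
    by (simp add: algebra_simps)
  thus "int (count Z (Y d)) - int (count Z' (Y d)) = int (count Z (X d)) - int (count Z' (X d))"
    using assms(3) by simp
  show "int (count Z' (W d)) = int (count Z (W d)) + int d * (int (count Z (X d)) - int (count Z' (X d)))"
    using a by (simp add: algebra_simps)
qed

lemma fdist_ge_count: "int (count A c) \<ge> int (count B c) + k \<Longrightarrow> k \<ge> 0 \<Longrightarrow> nat k \<le> fdist A B"
proof -
  assume "int (count A c) \<ge> int (count B c) + k" "k \<ge> 0"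
  hence "nat k \<le> count (A - B) c" by simp
  also have "\<dots> \<le> size (A - B)" by (rule count_le_size)
  finally show ?thesis by (simp add: fdist_def)
qed

lemma fdist_sym: "fdist A B = fdist B A" by (simp add: fdist_def max.commute)

lemma differ_ge:
  assumes "Z \<in> Fact C e" "Z' \<in> Fact C e" "d > 0" "differ d Z Z'"
  shows "d \<le> fdist Z Z'"
proof -
  define t where "t = int (count Z (X d)) - int (count Z' (X d))"
  have ty: "int (count Z (Y d)) - int (count Z' (Y d)) = t" and tw: "int (count Z' (W d)) = int (count Z (W d)) + int d * t"
    using fact_t[OF assms(1-3)] by (simp_all add: t_def)
  have "t \<noteq> 0"
  proof
    assume "t = 0"
    hence "count Z (X d) = count Z' (X d)" "count Z (Y d) = count Z' (Y d)" "count Z (W d) = count Z' (W d)"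
      using ty tw by (simp_all add: t_def)
    thus False using assms(4) by (simp add: differ_def)
  qed
  show ?thesis
  proof (cases "t > 0")
    case True
    have "1 \<le> t" using True by simp
    hence "int d \<le> int d * t" using mult_left_mono[of 1 t "int d"] by simp
    hence "int (count Z' (W d)) \<ge> int (count Z (W d)) + int d" using tw by linarith
    hence "nat (int d) \<le> fdist Z' Z" by (rule fdist_ge_count) simp
    thus ?thesis by (simp add: fdist_sym)
  next
    case False
    hence "t \<le> -1" using \<open>t \<noteq> 0\<close> by simp
    hence "int d * t \<le> - int d" by (metis mult_left_mono mult_minus1_right of_nat_0_le_iff)
    hence "int (count Z (W d)) \<ge> int (count Z' (W d)) + int d" using tw by linarith
    hence "nat (int d) \<le> fdist Z Z'" by (rule fdist_ge_count) simp
    thus ?thesis by simp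
  qed
qed

lemma differ_in_C:
  assumes "set_mset Z \<subseteq> Codes C" "set_mset Z' \<subseteq> Codes C" "differ d Z Z'"
  shows "d \<in> C"
proof -
  have "X d \<in># Z \<or> X d \<in># Z' \<or> Y d \<in># Z \<or> Y d \<in># Z' \<or> W d \<in># Z \<or> W d \<in># Z'"
    using assms(3) unfolding differ_def by (metis count_inI)
  thus ?thesis using assms(1,2) by (auto simp: Codes_def)
qed

lemma ne_differ:
  assumes "Z \<noteq> Z'"
  shows "\<exists>d. differ d Z Z'"
proof (rule ccontr)
  assume "\<not> (\<exists>d. differ d Z Z')"
  hence h: "\<And>d. \<not> differ d Z Z'" by blast
  have "Z = Z'"
  proof (rule multiset_eqI)
    fix c show "count Z c = count Z' c" using h by (cases c) (auto simp: differ_def)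
  qed
  thus False using assms by simp
qed

lemma val_rep_W: "val (replicate_mset n (W d)) = replicate_mset n (2*d) + replicate_mset n (2*d+1)"
  by (induction n) auto

lemma val_XY: "val {#X d, Y d#} = replicate_mset d (2*d) + replicate_mset d (2*d+1)"
  by simp

lemma swap:
  assumes Z: "Z \<in> Fact C e" and A: "A \<subseteq># Z" and v: "val A = val B" and B: "set_mset B \<subseteq> Codes C"
  shows "Z - A + B \<in> Fact C e" "fdist Z (Z - A + B) \<le> max (size A) (size B)"
proof -
  have "set_mset (Z - A + B) \<subseteq> Codes C" using Z B by (auto simp: Fact_def dest: in_diffD)
  moreover have "val (Z - A + B) = val Z"
  proof -
    have "val Z = val (Z - A + A)" using A by (simp add: subset_mset.diff_add)
    thus ?thesis using v by simp
  qed
  ultimately show "Z - A + B \<in> Fact C e" using Z by (simp add: Fact_def)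
  have "Z - (Z - A + B) \<subseteq># A"
    unfolding subseteq_mset_def by (simp add: le_diff_conv) (intro allI, linarith)
  hence 1: "size (Z - (Z - A + B)) \<le> size A" by (rule size_mset_mono)
  have "(Z - A + B) - Z \<subseteq># B"
    unfolding subseteq_mset_def by (simp, intro allI, linarith)
  hence 2: "size ((Z - A + B) - Z) \<le> size B" by (rule size_mset_mono)
  show "fdist Z (Z - A + B) \<le> max (size A) (size B)" using 1 2 by (auto simp: fdist_def le_max_iff_disj)
qed

lemma count_XY: "count {#X d, Y d#} c = (if c = X d then 1 else 0) + (if c = Y d then 1 else 0)"
  by auto

lemma step:
  assumes Z: "Z \<in> Fact C e" and Z': "Z' \<in> Fact C e" and df: "differ d Z Z'" and C2: "C \<subseteq> {2..}"
  shows "\<exists>Z1\<in>Fact C e. fdist Z Z1 \<le> d \<and>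
     (\<forall>d'. d' \<noteq> d \<longrightarrow> count Z1 (X d') = count Z (X d') \<and> count Z1 (Y d') = count Z (Y d') \<and> count Z1 (W d') = count Z (W d')) \<and>
     nat \<bar>int (count Z1 (X d)) - int (count Z' (X d))\<bar> < nat \<bar>int (count Z (X d)) - int (count Z' (X d))\<bar>"
proof -
  have dC: "d \<in> C" using differ_in_C[OF _ _ df] Z Z' by (auto simp: Fact_def)
  have d2: "d \<ge> 2" using dC C2 by auto
  define t where "t = int (count Z (X d)) - int (count Z' (X d))"
  have ty: "int (count Z (Y d)) - int (count Z' (Y d)) = t" and tw: "int (count Z' (W d)) = int (count Z (W d)) + int d * t"
    using fact_t[OF Z Z'] d2 by (simp_all add: t_def)
  have "t \<noteq> 0"
  proof
    assume "t = 0"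
    hence "count Z (X d) = count Z' (X d)" "count Z (Y d) = count Z' (Y d)" "count Z (W d) = count Z' (W d)"
      using ty tw by (simp_all add: t_def)
    thus False using df by (simp add: differ_def)
  qed
  define XY where "XY = {#X d, Y d#}"
  define R where "R = replicate_mset d (W d)"
  have vXYR: "val XY = val R" by (simp add: XY_def R_def val_rep_W)
  have sXY: "set_mset XY \<subseteq> Codes C" and sR: "set_mset R \<subseteq> Codes C" using dC d2 by (auto simp: XY_def R_def Codes_def)
  have szXY: "size XY \<le> d" and szR: "size R \<le> d" using d2 by (auto simp: XY_def R_def)
  show ?thesis
  proof (cases "t > 0")
    case True
    have "count Z (X d) \<ge> 1" "count Z (Y d) \<ge> 1" using True ty unfolding t_def by linarith+
    hence sub: "XY \<subseteq># Z" by (auto simp: XY_def subseteq_mset_def count_XY)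
    define Z1 where "Z1 = Z - XY + R"
    have "Z1 \<in> Fact C e" "fdist Z Z1 \<le> max (size XY) (size R)"
      using swap[OF Z sub vXYR sR] by (simp_all add: Z1_def)
    moreover have "\<forall>d'. d' \<noteq> d \<longrightarrow> count Z1 (X d') = count Z (X d') \<and> count Z1 (Y d') = count Z (Y d') \<and> count Z1 (W d') = count Z (W d')"
      by (auto simp: Z1_def XY_def R_def)
    moreover have "count Z1 (X d) = count Z (X d) - 1" by (simp add: Z1_def XY_def R_def)
    hence "nat \<bar>int (count Z1 (X d)) - int (count Z' (X d))\<bar> < nat \<bar>int (count Z (X d)) - int (count Z' (X d))\<bar>"
      using True \<open>count Z (X d) \<ge> 1\<close> by (simp add: t_def)
    ultimately show ?thesis using szXY szR by (intro bexI[of _ Z1]) auto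
  next
    case False
    hence "t \<le> -1" using \<open>t \<noteq> 0\<close> by simp
    hence "int d * t \<le> - int d" by (metis mult_left_mono mult_minus1_right of_nat_0_le_iff)
    hence "count Z (W d) \<ge> d" using tw by linarith
    hence sub: "R \<subseteq># Z" by (auto simp: R_def subseteq_mset_def)
    define Z1 where "Z1 = Z - R + XY"
    have "Z1 \<in> Fact C e" "fdist Z Z1 \<le> max (size R) (size XY)"
      using swap[OF Z sub vXYR[symmetric] sXY] by (simp_all add: Z1_def)
    moreover have "\<forall>d'. d' \<noteq> d \<longrightarrow> count Z1 (X d') = count Z (X d') \<and> count Z1 (Y d') = count Z (Y d') \<and> count Z1 (W d') = count Z (W d')"
      by (auto simp: Z1_def XY_def R_def)
    moreover have "count Z1 (X d) = count Z (X d) + 1" by (simp add: Z1_def XY_def R_def)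
    hence "nat \<bar>int (count Z1 (X d)) - int (count Z' (X d))\<bar> < nat \<bar>int (count Z (X d)) - int (count Z' (X d))\<bar>"
      using \<open>t \<le> -1\<close> by (simp add: t_def)
    ultimately show ?thesis using szXY szR by (intro bexI[of _ Z1]) auto
  qed
qed

definition cchain :: "nat set \<Rightarrow> nat multiset \<Rightarrow> nat \<Rightarrow> code multiset \<Rightarrow> code multiset \<Rightarrow> bool" where
  "cchain C e N Z Z' \<longleftrightarrow> (\<exists>zs. zs \<noteq> [] \<and> hd zs = Z \<and> last zs = Z' \<and> set zs \<subseteq> Fact C e \<and>
      (\<forall>i. Suc i < length zs \<longrightarrow> fdist (zs ! i) (zs ! Suc i) \<le> N))"

lemma cchain_refl: "Z \<in> Fact C e \<Longrightarrow> cchain C e N Z Z"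
  unfolding cchain_def by (rule exI[of _ "[Z]"]) auto

lemma cchain_cons:
  assumes "cchain C e N Z1 Z'" "Z \<in> Fact C e" "fdist Z Z1 \<le> N"
  shows "cchain C e N Z Z'"
proof -
  obtain zs where zs: "zs \<noteq> []" "hd zs = Z1" "last zs = Z'" "set zs \<subseteq> Fact C e"
    "\<forall>i. Suc i < length zs \<longrightarrow> fdist (zs ! i) (zs ! Suc i) \<le> N"
    using assms(1) unfolding cchain_def by blast
  have "\<forall>i. Suc i < length (Z # zs) \<longrightarrow> fdist ((Z # zs) ! i) ((Z # zs) ! Suc i) \<le> N"
  proof (intro allI impI)
    fix i assume "Suc i < length (Z # zs)"
    thus "fdist ((Z # zs) ! i) ((Z # zs) ! Suc i) \<le> N"
      using zs assms(3) by (cases i) (auto simp: hd_conv_nth)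
  qed
  thus ?thesis unfolding cchain_def using zs assms(2)
    by (intro exI[of _ "Z # zs"]) auto
qed

definition mu :: "nat set \<Rightarrow> code multiset \<Rightarrow> code multiset \<Rightarrow> nat" where
  "mu C Z' Z = (\<Sum>d\<in>C. nat \<bar>int (count Z (X d)) - int (count Z' (X d))\<bar>)"

lemma chain_up:
  assumes C2: "C \<subseteq> {2..}" and fin: "finite C"
  shows "Z \<in> Fact C e \<Longrightarrow> Z' \<in> Fact C e \<Longrightarrow> (\<forall>d. differ d Z Z' \<longrightarrow> d \<le> N) \<Longrightarrow> cchain C e N Z Z'"
proof (induction "mu C Z' Z" arbitrary: Z rule: less_induct)
  case less
  show ?case
  proof (cases "Z = Z'")
    case True thus ?thesis using less.prems cchain_refl by blast
  next
    case False
    then obtain d where df: "differ d Z Z'" using ne_differ by blast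
    have dC: "d \<in> C" using differ_in_C[OF _ _ df] less.prems by (auto simp: Fact_def)
    obtain Z1 where Z1: "Z1 \<in> Fact C e" "fdist Z Z1 \<le> d"
      "\<forall>d'. d' \<noteq> d \<longrightarrow> count Z1 (X d') = count Z (X d') \<and> count Z1 (Y d') = count Z (Y d') \<and> count Z1 (W d') = count Z (W d')"
      "nat \<bar>int (count Z1 (X d)) - int (count Z' (X d))\<bar> < nat \<bar>int (count Z (X d)) - int (count Z' (X d))\<bar>"
      using step[OF less.prems(1,2) df C2] by blast
    have "mu C Z' Z1 < mu C Z' Z"
      unfolding mu_def
    proof (rule sum_strict_mono_ex1[OF fin])
      show "\<forall>x\<in>C. nat \<bar>int (count Z1 (X x)) - int (count Z' (X x))\<bar> \<le> nat \<bar>int (count Z (X x)) - int (count Z' (X x))\<bar>"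
      proof
        fix x assume "x \<in> C"
        show "nat \<bar>int (count Z1 (X x)) - int (count Z' (X x))\<bar> \<le> nat \<bar>int (count Z (X x)) - int (count Z' (X x))\<bar>"
        proof (cases "x = d")
          case True thus ?thesis using less_imp_le[OF Z1(4)] by simp
        next
          case False thus ?thesis using Z1(3) by simp
        qed
      qed
      show "\<exists>a\<in>C. nat \<bar>int (count Z1 (X a)) - int (count Z' (X a))\<bar> < nat \<bar>int (count Z (X a)) - int (count Z' (X a))\<bar>"
        using Z1(4) dC by blast
    qed
    moreover have "\<forall>d'. differ d' Z1 Z' \<longrightarrow> d' \<le> N"
    proof (intro allI impI)
      fix d' assume "differ d' Z1 Z'"
      hence "differ d' Z Z'" using Z1(3) df by (cases "d' = d") (auto simp: differ_def)
      thus "d' \<le> N" using less.prems(3) by blast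
    qed
    ultimately have "cchain C e N Z1 Z'" using less.hyps Z1(1) less.prems(2) by blast
    moreover have "d \<le> N" using less.prems(3) df by blast
    hence "fdist Z Z1 \<le> N" using Z1(2) by linarith
    ultimately show ?thesis using cchain_cons less.prems(1) by blast
  qed
qed

lemma no_differ_list:
  "zs \<noteq> [] \<Longrightarrow> (\<forall>i. Suc i < length zs \<longrightarrow> \<not> differ d (zs!i) (zs!Suc i)) \<Longrightarrow> \<not> differ d (hd zs) (last zs)"
proof (induction zs)
  case Nil thus ?case by simp
next
  case (Cons x xs)
  show ?case
  proof (cases "xs = []")
    case True thus ?thesis by (simp add: differ_def)
  next
    case False
    have "\<not> differ d x (hd xs)" using Cons.prems(2)[rule_format, of 0] False by (simp add: hd_conv_nth)
    moreover have "\<forall>i. Suc i < length xs \<longrightarrow> \<not> differ d (xs!i) (xs!Suc i)"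
      using Cons.prems(2) by (metis Suc_less_eq length_Cons nth_Cons_Suc)
    hence "\<not> differ d (hd xs) (last xs)" using Cons.IH False by blast
    ultimately show ?thesis using False by (simp add: differ_def)
  qed
qed

lemma chain_low:
  assumes "cchain C e N Z Z'" "differ d Z Z'" "d > 0"
  shows "d \<le> N"
proof -
  obtain zs where zs: "zs \<noteq> []" "hd zs = Z" "last zs = Z'" "set zs \<subseteq> Fact C e"
    "\<forall>i. Suc i < length zs \<longrightarrow> fdist (zs ! i) (zs ! Suc i) \<le> N"
    using assms(1) unfolding cchain_def by blast
  obtain i where i: "Suc i < length zs" "differ d (zs!i) (zs!Suc i)"
    using no_differ_list[OF zs(1)] zs(2,3) assms(2) by blast
  have "zs!i \<in> Fact C e" "zs!Suc i \<in> Fact C e" using i(1) zs(4) by (auto dest: nth_mem)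
  hence "d \<le> fdist (zs!i) (zs!Suc i)" using differ_ge i(2) assms(3) by blast
  moreover have "fdist (zs!i) (zs!Suc i) \<le> N" using zs(5) i(1) by blast
  ultimately show ?thesis by linarith
qed

lemma f_inj: "C \<subseteq> {2..} \<Longrightarrow> inj_on (\<lambda>c. {encc c}) (Codes C)"
  unfolding inj_on_def encc_def using atm_inj enc_inj by blast

definition gJ :: "nat set \<Rightarrow> nat set \<Rightarrow> code" where
  "gJ C = inv_into (Codes C) (\<lambda>c. {encc c})"

lemma J_left_inv:
  assumes C2: "C \<subseteq> {2..}" and Z: "set_mset Z \<subseteq> Codes C"
  shows "image_mset (gJ C) (J Z) = Z"
proof -
  have "image_mset (gJ C) (J Z) = image_mset (gJ C \<circ> (\<lambda>c. {encc c})) Z" by (simp add: J_def multiset.map_comp)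
  also have "\<dots> = image_mset id Z"
    by (rule image_mset_cong) (use Z inv_into_f_f[OF f_inj[OF C2]] in \<open>auto simp: gJ_def\<close>)
  finally show ?thesis by simp
qed

lemma size_image_diff_le: "size (image_mset g M - image_mset g N) \<le> size (M - N)"
proof -
  have "M \<subseteq># (M - N) + N" unfolding subseteq_mset_def by (simp, intro allI, linarith)
  hence "image_mset g M \<subseteq># image_mset g (M - N) + image_mset g N"
    using image_mset_subseteq_mono by fastforce
  hence "image_mset g M - image_mset g N \<subseteq># image_mset g (M - N)" by (simp add: subset_eq_diff_conv)
  hence "size (image_mset g M - image_mset g N) \<le> size (image_mset g (M - N))" by (rule size_mset_mono)
  thus ?thesis by simp
qed

lemma fdist_image_le: "fdist (image_mset g M) (image_mset g N) \<le> fdist M N"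
  unfolding fdist_def using size_image_diff_le[of g M N] size_image_diff_le[of g N M] by auto

lemma fdist_J:
  assumes C2: "C \<subseteq> {2..}" and "set_mset Z \<subseteq> Codes C" "set_mset Z' \<subseteq> Codes C"
  shows "fdist (J Z) (J Z') = fdist Z Z'"
proof (rule antisym)
  show "fdist (J Z) (J Z') \<le> fdist Z Z'" unfolding J_def by (rule fdist_image_le)
  have "fdist Z Z' = fdist (image_mset (gJ C) (J Z)) (image_mset (gJ C) (J Z'))"
    using J_left_inv[OF C2] assms(2,3) by simp
  also have "\<dots> \<le> fdist (J Z) (J Z')" by (rule fdist_image_le)
  finally show "fdist Z Z' \<le> fdist (J Z) (J Z')" .
qed

lemma J_inj: "C \<subseteq> {2..} \<Longrightarrow> set_mset Z \<subseteq> Codes C \<Longrightarrow> set_mset Z' \<subseteq> Codes C \<Longrightarrow> J Z = J Z' \<Longrightarrow> Z = Z'"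
  by (metis J_left_inv)

lemma size_J[simp]: "size (J Z) = size Z" by (simp add: J_def)

lemma is_chain_iff:
  assumes a: "a \<in> carrier (HH C)" and C2: "C \<subseteq> {2..}" and Z: "Z \<in> Fact C (dec a)" and Z': "Z' \<in> Fact C (dec a)"
  shows "is_chain (HH C) a N (J Z) (J Z') \<longleftrightarrow> cchain C (dec a) N Z Z'"
proof
  assume "is_chain (HH C) a N (J Z) (J Z')"
  then obtain zs where zs: "zs \<noteq> []" "hd zs = J Z" "last zs = J Z'" "set zs \<subseteq> Zs (HH C) a"
    "\<forall>i. Suc i < length zs \<longrightarrow> fdist (zs ! i) (zs ! Suc i) \<le> N" unfolding is_chain_def by blast
  have inv: "image_mset (gJ C) z \<in> Fact C (dec a)" if z: "z \<in> set zs" for z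
  proof -
    have "z \<in> J ` Fact C (dec a)" using z zs(4) Zs_HH[OF a C2] by blast
    then obtain Y where Y: "Y \<in> Fact C (dec a)" "z = J Y" by blast
    have "image_mset (gJ C) z = Y" using Y J_left_inv[OF C2] by (simp add: Fact_def)
    thus ?thesis using Y(1) by simp
  qed
  define ys where "ys = map (image_mset (gJ C)) zs"
  have "ys \<noteq> []" "hd ys = Z" "last ys = Z'"
    using zs(1-3) Z Z' J_left_inv[OF C2] by (auto simp: ys_def hd_map last_map Fact_def)
  moreover have "set ys \<subseteq> Fact C (dec a)" using inv by (auto simp: ys_def)
  moreover have "\<forall>i. Suc i < length ys \<longrightarrow> fdist (ys ! i) (ys ! Suc i) \<le> N"
  proof (intro allI impI)
    fix i assume i: "Suc i < length ys"
    hence "fdist (ys ! i) (ys ! Suc i) = fdist (image_mset (gJ C) (zs ! i)) (image_mset (gJ C) (zs ! Suc i))"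
      by (simp add: ys_def)
    also have "\<dots> \<le> fdist (zs ! i) (zs ! Suc i)" by (rule fdist_image_le)
    also have "\<dots> \<le> N" using zs(5) i by (simp add: ys_def)
    finally show "fdist (ys ! i) (ys ! Suc i) \<le> N" .
  qed
  ultimately show "cchain C (dec a) N Z Z'" unfolding cchain_def by blast
next
  assume "cchain C (dec a) N Z Z'"
  then obtain ys where ys: "ys \<noteq> []" "hd ys = Z" "last ys = Z'" "set ys \<subseteq> Fact C (dec a)"
    "\<forall>i. Suc i < length ys \<longrightarrow> fdist (ys ! i) (ys ! Suc i) \<le> N" unfolding cchain_def by blast
  define zs where "zs = map J ys"
  have "zs \<noteq> []" "hd zs = J Z" "last zs = J Z'"
    using ys by (auto simp: zs_def hd_map last_map)
  moreover have "set zs \<subseteq> Zs (HH C) a" using ys(4) Zs_HH[OF a C2] by (auto simp: zs_def)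
  moreover have "\<forall>i. Suc i < length zs \<longrightarrow> fdist (zs ! i) (zs ! Suc i) \<le> N"
  proof (intro allI impI)
    fix i assume i: "Suc i < length zs"
    hence "fdist (zs ! i) (zs ! Suc i) = fdist (J (ys ! i)) (J (ys ! Suc i))"
      by (simp add: zs_def)
    also have "\<dots> \<le> fdist (ys ! i) (ys ! Suc i)" unfolding J_def by (rule fdist_image_le)
    also have "\<dots> \<le> N" using ys(5) i by (simp add: zs_def)
    finally show "fdist (zs ! i) (zs ! Suc i) \<le> N" .
  qed
  ultimately show "is_chain (HH C) a N (J Z) (J Z')" unfolding is_chain_def by blast
qed

lemma all_chained_iff:
  assumes a: "a \<in> carrier (HH C)" and C2: "C \<subseteq> {2..}"
  shows "all_chained (HH C) a N \<longleftrightarrow> (\<forall>Z\<in>Fact C (dec a). \<forall>Z'\<in>Fact C (dec a). cchain C (dec a) N Z Z')"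
  unfolding all_chained_def Zs_HH[OF a C2] using is_chain_iff[OF a C2] by blast

lemma codes_in_comp:
  assumes C2: "C \<subseteq> {2..}" and d: "d \<in> C" and Z: "Z \<in> Fact C (atm (X d) + atm (Y d))" and c: "c \<in># Z"
  shows "c = X d \<or> c = Y d \<or> c = W d"
proof -
  have "Z = add_mset c (Z - {#c#})" using c by simp
  hence "val Z = val (add_mset c (Z - {#c#}))" by simp
  hence "val Z = atm c + val (Z - {#c#})" by simp
  moreover have "val Z = atm (X d) + atm (Y d)" using Z by (simp add: Fact_def)
  ultimately have "atm c \<subseteq># atm (X d) + atm (Y d)" by (metis mset_subset_eq_add_left)
  hence "set_mset (atm c) \<subseteq> set_mset (atm (X d) + atm (Y d))" by (rule set_mset_mono)
  moreover have "d > 0" using d C2 by auto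
  moreover have "c \<in> Codes C" using Z c by (auto simp: Fact_def)
  then obtain d' where d': "d' \<in> C" "c = X d' \<or> c = Y d' \<or> c = W d'" by (auto simp: Codes_def)
  moreover have "d' > 0" using d'(1) C2 by auto
  have "set_mset (atm (X d) + atm (Y d)) = {2*d, 2*d+1}" using \<open>d > 0\<close> by auto
  with \<open>set_mset (atm c) \<subseteq> set_mset (atm (X d) + atm (Y d))\<close>
  have sub: "set_mset (atm c) \<subseteq> {2*d, 2*d+1}" by simp
  have m: "2*d' \<in> set_mset (atm c) \<or> 2*d'+1 \<in> set_mset (atm c)"
    using d'(2) \<open>d' > 0\<close> by (elim disjE) simp_all
  have "2*d' \<in> {2*d, 2*d+1} \<or> 2*d'+1 \<in> {2*d, 2*d+1}" using sub m by blast
  hence "d' = d" by auto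
  thus ?thesis using d'(2) by blast
qed

lemma fact_comp:
  assumes C2: "C \<subseteq> {2..}" and d: "d \<in> C"
  shows "Fact C (atm (X d) + atm (Y d)) = {{#X d, Y d#}, replicate_mset d (W d)}"
proof
  have d0: "d > 0" using d C2 by auto
  show "{{#X d, Y d#}, replicate_mset d (W d)} \<subseteq> Fact C (atm (X d) + atm (Y d))"
    using d d0 by (auto simp: Fact_def Codes_def val_rep_W)
  show "Fact C (atm (X d) + atm (Y d)) \<subseteq> {{#X d, Y d#}, replicate_mset d (W d)}"
  proof
    fix Z assume Z: "Z \<in> Fact C (atm (X d) + atm (Y d))"
    have other: "\<And>c. c \<noteq> X d \<Longrightarrow> c \<noteq> Y d \<Longrightarrow> c \<noteq> W d \<Longrightarrow> count Z c = 0"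
      using codes_in_comp[OF C2 d Z] by (meson count_inI)
    have ex: "d * count Z (X d) + count Z (W d) = d" using count_val_x[of Z d] Z by (simp add: Fact_def)
    have ey: "d * count Z (Y d) + count Z (W d) = d" using count_val_y[of Z d] Z by (simp add: Fact_def)
    show "Z \<in> {{#X d, Y d#}, replicate_mset d (W d)}"
    proof (cases "count Z (W d) = 0")
      case True
      hence "count Z (X d) = 1" "count Z (Y d) = 1" using ex ey d0 by simp_all
      hence "Z = {#X d, Y d#}"
      proof (intro multiset_eqI)
        fix c assume "count Z (X d) = 1" "count Z (Y d) = 1"
        thus "count Z c = count {#X d, Y d#} c"
          using True other[of c] by (cases "c = W d"; cases "c = X d"; cases "c = Y d") auto
      qed
      thus ?thesis by simp
    next
      case False
      have "d * count Z (X d) < d" using ex False by linarith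
      hence x0: "count Z (X d) = 0" using d0 by simp
      have "d * count Z (Y d) < d" using ey False by linarith
      hence y0: "count Z (Y d) = 0" using d0 by simp
      have w: "count Z (W d) = d" using ex x0 by simp
      have "Z = replicate_mset d (W d)"
      proof (rule multiset_eqI)
        fix c show "count Z c = count (replicate_mset d (W d)) c"
          using x0 y0 w other[of c] by (cases "c = W d"; cases "c = X d"; cases "c = Y d") auto
      qed
      thus ?thesis by simp
    qed
  qed
qed

definition ad :: "nat \<Rightarrow> nat" where "ad d = enc (atm (X d) + atm (Y d))"

lemma ad_carrier: "d \<in> C \<Longrightarrow> ad d \<in> carrier (HH C)"
proof -
  assume d: "d \<in> C"
  have "X d \<in> Codes C" "Y d \<in> Codes C" using d by (auto simp: Codes_def)
  hence "atm (X d) + atm (Y d) \<in> SS C" by (intro SS_add atm_SS)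
  thus ?thesis unfolding ad_def carrier_HH by (rule imageI)
qed

lemma dec_ad[simp]: "dec (ad d) = atm (X d) + atm (Y d)" by (simp add: ad_def)

lemma differ_comp:
  assumes "U \<in> {{#X d, Y d#}, replicate_mset d (W d)}" "U' \<in> {{#X d, Y d#}, replicate_mset d (W d)}"
    "differ d' U U'"
  shows "d' = d"
  using assms by (auto simp: differ_def split: if_splits)

lemma differ_XYR: "d > 0 \<Longrightarrow> differ d {#X d, Y d#} (replicate_mset d (W d))"
  by (simp add: differ_def)

lemma comp_chained:
  assumes C2: "C \<subseteq> {2..}" and fin: "finite C" and d: "d \<in> C"
  shows "all_chained (HH C) (ad d) d" "\<And>M. M < d \<Longrightarrow> \<not> all_chained (HH C) (ad d) M"
proof -
  have d0: "d > 0" using d C2 by auto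
  have F: "Fact C (dec (ad d)) = {{#X d, Y d#}, replicate_mset d (W d)}" using fact_comp[OF C2 d] by simp
  show "all_chained (HH C) (ad d) d"
    unfolding all_chained_iff[OF ad_carrier[OF d] C2]
  proof (intro ballI)
    fix Z Z' assume Z: "Z \<in> Fact C (dec (ad d))" and Z': "Z' \<in> Fact C (dec (ad d))"
    have "\<forall>d'. differ d' Z Z' \<longrightarrow> d' \<le> d" using Z Z' F differ_comp by (metis le_refl)
    thus "cchain C (dec (ad d)) d Z Z'" using chain_up[OF C2 fin Z Z'] by blast
  qed
  fix M assume M: "M < d"
  show "\<not> all_chained (HH C) (ad d) M"
  proof
    assume "all_chained (HH C) (ad d) M"
    hence "cchain C (dec (ad d)) M {#X d, Y d#} (replicate_mset d (W d))"
      unfolding all_chained_iff[OF ad_carrier[OF d] C2] using F by blast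
    hence "d \<le> M" using chain_low differ_XYR[OF d0] d0 by blast
    thus False using M by simp
  qed
qed

lemma cat_unique:
  "is_catenary_degree G a N \<Longrightarrow> all_chained G a D \<Longrightarrow> (\<forall>M<D. \<not> all_chained G a M) \<Longrightarrow> N = D"
  unfolding is_catenary_degree_def by (metis linorder_neqE_nat)

lemma Zs_pair:
  assumes a: "a \<in> carrier (HH C)" and C2: "C \<subseteq> {2..}" and z: "z \<in> Zs (HH C) a" "z' \<in> Zs (HH C) a" "z \<noteq> z'"
  obtains Z Z' where "Z \<in> Fact C (dec a)" "Z' \<in> Fact C (dec a)" "z = J Z" "z' = J Z'" "Z \<noteq> Z'"
  using z Zs_HH[OF a C2] by auto

lemma Ca_HH:
  assumes C2: "C \<subseteq> {2..}" and fin: "finite C"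
  shows "Ca (HH C) = C"
proof
  show "Ca (HH C) \<subseteq> C"
  proof
    fix N assume "N \<in> Ca (HH C)"
    then obtain a z z' where a: "a \<in> carrier (HH C)" and z: "z \<in> Zs (HH C) a" "z' \<in> Zs (HH C) a" "z \<noteq> z'"
      and cat: "is_catenary_degree (HH C) a N" unfolding Ca_def by blast
    obtain Z Z' where ZZ: "Z \<in> Fact C (dec a)" "Z' \<in> Fact C (dec a)" "Z \<noteq> Z'"
      using Zs_pair[OF a C2 z] by metis
    define Ds where "Ds = {d. \<exists>U\<in>Fact C (dec a). \<exists>U'\<in>Fact C (dec a). differ d U U'}"
    have DsC: "Ds \<subseteq> C" unfolding Ds_def using differ_in_C by (fastforce simp: Fact_def)
    have "Ds \<noteq> {}" using ne_differ[OF ZZ(3)] ZZ unfolding Ds_def by blast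
    define D where "D = Max Ds"
    have finD: "finite Ds" using DsC fin finite_subset by blast
    have DD: "D \<in> Ds" unfolding D_def using finD \<open>Ds \<noteq> {}\<close> by simp
    have D0: "D > 0" using DD DsC C2 by auto
    have "all_chained (HH C) a D"
      unfolding all_chained_iff[OF a C2]
    proof (intro ballI)
      fix U U' assume U: "U \<in> Fact C (dec a)" "U' \<in> Fact C (dec a)"
      have "\<forall>d. differ d U U' \<longrightarrow> d \<le> D" unfolding D_def using U finD by (auto simp: Ds_def intro!: Max_ge)
      thus "cchain C (dec a) D U U'" using chain_up[OF C2 fin U] by blast
    qed
    moreover have "\<forall>M<D. \<not> all_chained (HH C) a M"
    proof (intro allI impI notI)
      fix M assume M: "M < D" "all_chained (HH C) a M"
      obtain U U' where U: "U \<in> Fact C (dec a)" "U' \<in> Fact C (dec a)" "differ D U U'" using DD Ds_def by blast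
      have "cchain C (dec a) M U U'" using M(2) U unfolding all_chained_iff[OF a C2] by blast
      hence "D \<le> M" using chain_low U(3) D0 by blast
      thus False using M(1) by simp
    qed
    ultimately have "N = D" using cat_unique[OF cat] by blast
    thus "N \<in> C" using DD DsC by blast
  qed
next
  show "C \<subseteq> Ca (HH C)"
  proof
    fix d assume d: "d \<in> C"
    have d0: "d > 0" using d C2 by auto
    have F: "Fact C (dec (ad d)) = {{#X d, Y d#}, replicate_mset d (W d)}" using fact_comp[OF C2 d] by simp
    have ne: "{#X d, Y d#} \<noteq> replicate_mset d (W d)" using d0 by (metis count_replicate_mset differ_XYR differ_def count_add_mset) 
    have "J {#X d, Y d#} \<noteq> J (replicate_mset d (W d))"
      using J_inj[OF C2] ne F by (auto simp: Fact_def)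
    moreover have "J {#X d, Y d#} \<in> Zs (HH C) (ad d)" "J (replicate_mset d (W d)) \<in> Zs (HH C) (ad d)"
      using Zs_HH[OF ad_carrier[OF d] C2] F by auto
    moreover have "is_catenary_degree (HH C) (ad d) d"
      unfolding is_catenary_degree_def using comp_chained[OF C2 fin d] by blast
    ultimately show "d \<in> Ca (HH C)" unfolding Ca_def using ad_carrier[OF d] by blast
  qed
qed

lemma fdist_XYR:
  assumes "d \<ge> 2"
  shows "fdist {#X d, Y d#} (replicate_mset d (W d)) = d"
proof -
  have 1: "{#X d, Y d#} - replicate_mset d (W d) = {#X d, Y d#}"
    by (rule multiset_eqI) simp
  have 2: "replicate_mset d (W d) - {#X d, Y d#} = replicate_mset d (W d)"
    by (rule multiset_eqI) simp
  show ?thesis unfolding fdist_def 1 2 using assms by simp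
qed

lemma Rset_HH:
  assumes C2: "C \<subseteq> {2..}" and fin: "finite C"
  shows "Rset (HH C) = C"
proof
  show "Rset (HH C) \<subseteq> C"
  proof
    fix d assume "d \<in> Rset (HH C)"
    then obtain a z z' where d2: "d \<ge> 2" and a: "a \<in> carrier (HH C)" and z: "z \<in> Zs (HH C) a" "z' \<in> Zs (HH C) a" "z \<noteq> z'"
      and fd: "fdist z z' = d" and nc: "\<not> is_chain (HH C) a (d - 1) z z'" unfolding Rset_def by blast
    obtain Z Z' where ZZ: "Z \<in> Fact C (dec a)" "Z' \<in> Fact C (dec a)" "z = J Z" "z' = J Z'"
      using Zs_pair[OF a C2 z] by metis
    have fdZ: "fdist Z Z' = d" using fd ZZ fdist_J[OF C2] by (simp add: Fact_def)
    show "d \<in> C"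
    proof (rule ccontr)
      assume nd: "d \<notin> C"
      have "\<forall>d'. differ d' Z Z' \<longrightarrow> d' \<le> d - 1"
      proof (intro allI impI)
        fix d' assume df: "differ d' Z Z'"
        have "d' \<in> C" using differ_in_C[OF _ _ df] ZZ by (simp add: Fact_def)
        hence "d' > 0" "d' \<noteq> d" using C2 nd by auto
        moreover have "d' \<le> d" using differ_ge[OF ZZ(1,2) \<open>d' > 0\<close> df] fdZ by simp
        ultimately show "d' \<le> d - 1" by simp
      qed
      hence "cchain C (dec a) (d - 1) Z Z'" using chain_up[OF C2 fin ZZ(1,2)] by blast
      hence "is_chain (HH C) a (d - 1) z z'" using is_chain_iff[OF a C2 ZZ(1,2)] ZZ(3,4) by simp
      thus False using nc by simp
    qed
  qed
next
  show "C \<subseteq> Rset (HH C)"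
  proof
    fix d assume d: "d \<in> C"
    have d2: "d \<ge> 2" using d C2 by auto
    have F: "Fact C (dec (ad d)) = {{#X d, Y d#}, replicate_mset d (W d)}" using fact_comp[OF C2 d] by simp
    have ne: "{#X d, Y d#} \<noteq> replicate_mset d (W d)"
    proof
      assume "{#X d, Y d#} = replicate_mset d (W d)"
      hence "count {#X d, Y d#} (X d) = count (replicate_mset d (W d)) (X d)" by simp
      thus False by simp
    qed
    have neJ: "J {#X d, Y d#} \<noteq> J (replicate_mset d (W d))"
      using J_inj[OF C2] ne F by (auto simp: Fact_def)
    have inZ: "J {#X d, Y d#} \<in> Zs (HH C) (ad d)" "J (replicate_mset d (W d)) \<in> Zs (HH C) (ad d)"
      using Zs_HH[OF ad_carrier[OF d] C2] F by auto
    have cs: "set_mset {#X d, Y d#} \<subseteq> Codes C" "set_mset (replicate_mset d (W d)) \<subseteq> Codes C"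
      using d by (auto simp: Codes_def)
    have fd: "fdist (J {#X d, Y d#}) (J (replicate_mset d (W d))) = d"
      using fdist_J[OF C2 cs] fdist_XYR[OF d2] by simp
    have "\<not> is_chain (HH C) (ad d) (d - 1) (J {#X d, Y d#}) (J (replicate_mset d (W d)))"
    proof
      assume "is_chain (HH C) (ad d) (d - 1) (J {#X d, Y d#}) (J (replicate_mset d (W d)))"
      hence "cchain C (dec (ad d)) (d - 1) {#X d, Y d#} (replicate_mset d (W d))"
        using is_chain_iff[OF ad_carrier[OF d] C2] F by auto
      hence "d \<le> d - 1" using chain_low[OF _ differ_XYR[of d]] d2 by simp
      thus False using d2 by simp
    qed
    thus "d \<in> Rset (HH C)" unfolding Rset_def using d2 ad_carrier[OF d] neJ inZ fd by blast
  qed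
qed

lemma Ls_HH: "a \<in> carrier (HH C) \<Longrightarrow> C \<subseteq> {2..} \<Longrightarrow> Ls (HH C) a = size ` Fact C (dec a)"
  unfolding Ls_def by (simp add: Zs_HH image_image)

lemma encc_mult: "encc c1 \<otimes>\<^bsub>HH C\<^esub> encc c2 = enc (atm c1 + atm c2)"
  by (simp add: mult_HH encc_def)

lemma Ls_ad: "C \<subseteq> {2..} \<Longrightarrow> d \<in> C \<Longrightarrow> Ls (HH C) (ad d) = {2, d}"
  using Ls_HH[OF ad_carrier] fact_comp by auto

lemma daleth_HH:
  assumes C2: "C \<subseteq> {2..}" and fin: "finite C"
  shows "daleth_star (HH C) = C - {2}"
proof
  show "daleth_star (HH C) \<subseteq> C - {2}"
  proof
    fix x assume "x \<in> daleth_star (HH C)"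
    then obtain u v where x: "x = Inf (Ls (HH C) (u \<otimes>\<^bsub>HH C\<^esub> v) - {2})" and uv: "u \<in> atoms (HH C)" "v \<in> atoms (HH C)"
      and ll: "\<exists>l\<in>Ls (HH C) (u \<otimes>\<^bsub>HH C\<^esub> v). \<exists>l'\<in>Ls (HH C) (u \<otimes>\<^bsub>HH C\<^esub> v). l \<noteq> l'"
      unfolding daleth_star_def by blast
    obtain c1 c2 where c: "c1 \<in> Codes C" "c2 \<in> Codes C" "u = encc c1" "v = encc c2"
      using uv atoms_HH[OF C2] by auto
    define a where "a = enc (atm c1 + atm c2)"
    have uva: "u \<otimes>\<^bsub>HH C\<^esub> v = a" using c by (simp add: encc_mult a_def)
    have a: "a \<in> carrier (HH C)" using c by (simp add: a_def carrier_HH SS_add atm_SS)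
    have Z0: "{#c1, c2#} \<in> Fact C (dec a)" using c by (simp add: Fact_def a_def)
    obtain Z where Z: "Z \<in> Fact C (dec a)" "size Z \<noteq> 2"
      using ll uva Ls_HH[OF a C2] by (metis imageE)
    have "Z \<noteq> {#c1, c2#}" using Z(2) by auto
    then obtain d where df: "differ d {#c1, c2#} Z" using ne_differ by metis
    have dC: "d \<in> C" using differ_in_C[OF _ _ df] Z0 Z by (simp add: Fact_def)
    have d2: "d \<ge> 2" using dC C2 by auto
    define t where "t = int (count {#c1, c2#} (X d)) - int (count Z (X d))"
    have ty: "int (count {#c1, c2#} (Y d)) - int (count Z (Y d)) = t"
      and tw: "int (count Z (W d)) = int (count {#c1, c2#} (W d)) + int d * t"
      using fact_t[OF Z0 Z(1)] d2 by (simp_all add: t_def)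
    have "t \<noteq> 0"
    proof
      assume "t = 0"
      hence "count {#c1, c2#} (X d) = count Z (X d)" "count {#c1, c2#} (Y d) = count Z (Y d)"
        "count {#c1, c2#} (W d) = count Z (W d)"
        using ty tw by (simp_all add: t_def)
      thus False using df by (simp add: differ_def)
    qed
    show "x \<in> C - {2}"
    proof (cases "t > 0")
      case True
      have "count {#c1, c2#} (X d) \<ge> 1" "count {#c1, c2#} (Y d) \<ge> 1" using True ty unfolding t_def by linarith+
      hence "(c1 = X d \<and> c2 = Y d) \<or> (c1 = Y d \<and> c2 = X d)" by (auto split: if_splits)
      hence "dec a = atm (X d) + atm (Y d)" by (auto simp: a_def)
      hence L: "Ls (HH C) a = {2, d}" using Ls_HH[OF a C2] fact_comp[OF C2 dC] by (simp add: numeral_2_eq_2)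
      have "size Z \<in> Ls (HH C) a" using Ls_HH[OF a C2] Z(1) by simp
      hence "d \<noteq> 2" using Z(2) L by auto
      hence "Ls (HH C) a - {2} = {d}" using L by auto
      thus ?thesis using x uva dC \<open>d \<noteq> 2\<close> by simp
    next
      case False
      hence "t \<le> -1" using \<open>t \<noteq> 0\<close> by simp
      hence "int d * t \<le> - int d" by (metis mult_left_mono mult_minus1_right of_nat_0_le_iff)
      hence cw: "count {#c1, c2#} (W d) \<ge> d" using tw by linarith
      have "count {#c1, c2#} (W d) \<le> 2" by simp
      hence "d = 2" "c1 = W 2" "c2 = W 2" using cw d2 by (auto split: if_splits)
      hence "dec a = atm (W 2) + atm (W 2)" by (simp add: a_def)
      also have "\<dots> = atm (X 2) + atm (Y 2)" by (rule multiset_eqI) (auto simp: numeral_2_eq_2)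
      finally have da: "dec a = atm (X 2) + atm (Y 2)" .
      have "2 \<in> C" using dC \<open>d = 2\<close> by simp
      hence "Fact C (dec a) = {{#X 2, Y 2#}, replicate_mset 2 (W 2)}" using fact_comp[OF C2] da by (simp only:)
      hence L: "Ls (HH C) a = {2}" using Ls_HH[OF a C2] by (simp add: numeral_2_eq_2)
      have "size Z \<in> Ls (HH C) a" using Ls_HH[OF a C2] Z(1) by simp
      thus ?thesis using Z(2) L by simp
    qed
  qed
next
  show "C - {2} \<subseteq> daleth_star (HH C)"
  proof
    fix d assume d: "d \<in> C - {2}"
    have uv: "encc (X d) \<in> atoms (HH C)" "encc (Y d) \<in> atoms (HH C)"
      using d atoms_HH[OF C2] by (auto simp: Codes_def)
    have m: "encc (X d) \<otimes>\<^bsub>HH C\<^esub> encc (Y d) = ad d" by (simp add: encc_mult ad_def)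
    have L: "Ls (HH C) (ad d) = {2, d}" using Ls_ad[OF C2] d by simp
    have "Inf (Ls (HH C) (ad d) - {2}) = d" using L d by simp
    moreover have "\<exists>l\<in>Ls (HH C) (ad d). \<exists>l'\<in>Ls (HH C) (ad d). l \<noteq> l'" using L d by auto
    ultimately show "d \<in> daleth_star (HH C)" unfolding daleth_star_def using uv m by force
  qed
qed

definition kY :: "nat multiset \<Rightarrow> nat \<Rightarrow> nat" where
  "kY m d = (count m (2*d) mod d + d - count m (2*d+1) mod d) mod d"
definition kX :: "nat multiset \<Rightarrow> nat \<Rightarrow> nat" where
  "kX m d = (count m (2*d+1) mod d + d - count m (2*d) mod d) mod d"
definition fixY :: "nat set \<Rightarrow> nat multiset \<Rightarrow> nat multiset" where
  "fixY C m = (\<Sum>d\<in>C. replicate_mset (kY m d) (2*d+1))"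
definition fixX :: "nat set \<Rightarrow> nat multiset \<Rightarrow> nat multiset" where
  "fixX C m = (\<Sum>d\<in>C. replicate_mset (kX m d) (2*d))"

lemma count_fixY_even: "count (fixY C m) (2*q) = 0"
  by (simp add: fixY_def count_sum)
lemma count_fixX_odd: "count (fixX C m) (2*q+1) = 0"
  by (simp add: fixX_def count_sum)
lemma count_fixY_odd: "finite C \<Longrightarrow> d \<in> C \<Longrightarrow> count (fixY C m) (2*d+1) = kY m d"
  by (simp add: fixY_def count_sum)
lemma count_fixX_even: "finite C \<Longrightarrow> d \<in> C \<Longrightarrow> count (fixX C m) (2*d) = kX m d"
  by (simp add: fixX_def count_sum)

lemma set_fixY: "set_mset (fixY C m) \<subseteq> PP C"
proof
  fix x assume "x \<in># fixY C m"
  hence "count (fixY C m) x \<noteq> 0" by simp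
  hence "(\<Sum>d\<in>C. count (replicate_mset (kY m d) (2*d+1)) x) \<noteq> 0" by (metis fixY_def count_sum)
  then obtain d where "d \<in> C" "count (replicate_mset (kY m d) (2*d+1)) x \<noteq> 0"
    by (metis (mono_tags, lifting) sum.neutral)
  thus "x \<in> PP C" by (auto simp: PP_def split: if_splits)
qed

lemma set_fixX: "set_mset (fixX C m) \<subseteq> PP C"
proof
  fix x assume "x \<in># fixX C m"
  hence "count (fixX C m) x \<noteq> 0" by simp
  hence "(\<Sum>d\<in>C. count (replicate_mset (kX m d) (2*d)) x) \<noteq> 0" by (metis fixX_def count_sum)
  then obtain d where "d \<in> C" "count (replicate_mset (kX m d) (2*d)) x \<noteq> 0"
    by (metis (mono_tags, lifting) sum.neutral)
  thus "x \<in> PP C" by (auto simp: PP_def split: if_splits)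
qed

lemma mod_fix: "(d::nat) > 0 \<Longrightarrow> (b + (a mod d + d - b mod d) mod d) mod d = a mod d"
proof -
  assume d: "d > 0"
  have "(b + (a mod d + d - b mod d) mod d) mod d = (b mod d + (a mod d + d - b mod d)) mod d"
    by (metis mod_add_left_eq mod_add_right_eq)
  also have "b mod d + (a mod d + d - b mod d) = a mod d + d" using d
    by (metis add.commute le_add_diff_inverse2 less_imp_le_nat mod_less_divisor trans_le_add2)
  also have "(a mod d + d) mod d = a mod d" by simp
  finally show ?thesis .
qed

lemma parity_cases: "\<exists>q. (x::nat) = 2*q \<or> x = 2*q+1"
  by presburger

lemma compY_SS:
  assumes "set_mset m \<subseteq> PP C" "finite C" "C \<subseteq> {2..}"
  shows "m + fixY C m \<in> SS C"
proof -
  have "set_mset (m + fixY C m) \<subseteq> PP C" using assms(1) set_fixY by auto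
  moreover have "\<forall>d\<in>C. count (m + fixY C m) (2*d) mod d = count (m + fixY C m) (2*d+1) mod d"
  proof
    fix d assume d: "d \<in> C"
    hence "d > 0" using assms(3) by auto
    thus "count (m + fixY C m) (2*d) mod d = count (m + fixY C m) (2*d+1) mod d"
      using count_fixY_even[of C m d] count_fixY_odd[OF assms(2) d, of m] mod_fix[of d "count m (2*d+1)" "count m (2*d)"]
      by (simp add: kY_def)
  qed
  ultimately show ?thesis by (simp add: SS_def)
qed

lemma compX_SS:
  assumes "set_mset m \<subseteq> PP C" "finite C" "C \<subseteq> {2..}"
  shows "m + fixX C m \<in> SS C"
proof -
  have "set_mset (m + fixX C m) \<subseteq> PP C" using assms(1) set_fixX by auto
  moreover have "\<forall>d\<in>C. count (m + fixX C m) (2*d) mod d = count (m + fixX C m) (2*d+1) mod d"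
  proof
    fix d assume d: "d \<in> C"
    hence "d > 0" using assms(3) by auto
    thus "count (m + fixX C m) (2*d) mod d = count (m + fixX C m) (2*d+1) mod d"
      using count_fixX_odd[of C m d] count_fixX_even[OF assms(2) d, of m] mod_fix[of d "count m (2*d)" "count m (2*d+1)"]
      by (simp add: kX_def)
  qed
  ultimately show ?thesis by (simp add: SS_def)
qed

lemma divisor_theory_HH:
  assumes fin: "finite C" and C2: "C \<subseteq> {2..}"
  shows "divisor_theory (HH C) (PP C) dec"
  unfolding divisor_theory_def
proof (intro conjI ballI allI impI)
  show "dec \<one>\<^bsub>HH C\<^esub> = {#}" by (simp add: one_HH)
next
  fix a b assume "a \<in> carrier (HH C)" "b \<in> carrier (HH C)"
  thus "dec (a \<otimes>\<^bsub>HH C\<^esub> b) = dec a + dec b" by (simp add: dec_mult)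
next
  fix a assume "a \<in> carrier (HH C)" thus "set_mset (dec a) \<subseteq> PP C" by (auto simp: carrier_HH SS_def)
next
  fix a b assume "a \<in> carrier (HH C)" "b \<in> carrier (HH C)" "dec a \<subseteq># dec b"
  thus "a divides\<^bsub>HH C\<^esub> b" using divides_HH by blast
next
  fix m :: "nat multiset" assume m: "set_mset m \<subseteq> PP C"
  define A where "A = {enc (m + fixY C m), enc (m + fixX C m)}"
  have "finite A" "A \<noteq> {}" by (auto simp: A_def)
  moreover have "A \<subseteq> carrier (HH C)" using compY_SS[OF m fin C2] compX_SS[OF m fin C2]
    by (auto simp: A_def carrier_HH)
  moreover have "\<forall>a\<in>A. m \<subseteq># dec a" by (auto simp: A_def)
  moreover have "\<forall>m'. (\<forall>a\<in>A. m' \<subseteq># dec a) \<longrightarrow> m' \<subseteq># m"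
  proof (intro allI impI)
    fix m' assume h: "\<forall>a\<in>A. m' \<subseteq># dec a"
    have 1: "m' \<subseteq># m + fixY C m" "m' \<subseteq># m + fixX C m" using h by (auto simp: A_def)
    show "m' \<subseteq># m"
      unfolding subseteq_mset_def
    proof
      fix x :: nat
      obtain q where "x = 2*q \<or> x = 2*q+1" using parity_cases by blast
      thus "count m' x \<le> count m x"
      proof
        assume x: "x = 2*q"
        have "count m' x \<le> count (m + fixY C m) x" using 1(1) by (simp add: subseteq_mset_def)
        thus ?thesis using x count_fixY_even by simp
      next
        assume x: "x = 2*q+1"
        have "count m' x \<le> count (m + fixX C m) x" using 1(2) by (simp add: subseteq_mset_def)
        thus ?thesis using x count_fixX_odd by simp
      qed
    qed
  qed
  ultimately show "\<exists>A. finite A \<and> A \<noteq> {} \<and> A \<subseteq> carrier (HH C) \<and> (\<forall>a\<in>A. m \<subseteq># dec a) \<and>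
      (\<forall>m'. (\<forall>a\<in>A. m' \<subseteq># dec a) \<longrightarrow> m' \<subseteq># m)" by blast
qed

lemma fg_HH:
  assumes fin: "finite C" and C2: "C \<subseteq> {2..}"
  shows "finitely_generated (HH C)"
  unfolding finitely_generated_def
proof (rule exI[of _ "encc ` Codes C"], intro conjI ballI)
  have "Codes C \<subseteq> X ` C \<union> Y ` C \<union> W ` C" by (auto simp: Codes_def)
  hence "finite (Codes C)" using fin finite_subset by blast
  thus "finite (encc ` Codes C)" by simp
  show "encc ` Codes C \<subseteq> carrier (HH C)" using encc_carrier by blast
  fix a assume a: "a \<in> carrier (HH C)"
  obtain Z where Z: "Z \<in> Fact C (dec a)" using exists_fact a C2 by (metis carrier_HH_iff)
  obtain cs where cs: "mset cs = Z" using ex_mset by blast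
  have "set (map encc cs) \<subseteq> encc ` Codes C" using Z cs by (auto simp: Fact_def)
  moreover have "a = foldr (\<otimes>\<^bsub>HH C\<^esub>) (map encc cs) \<one>\<^bsub>HH C\<^esub>"
  proof -
    have "foldr (\<otimes>\<^bsub>HH C\<^esub>) (map encc cs) \<one>\<^bsub>HH C\<^esub> = enc (sum_list (map atm cs))"
      by (simp add: foldr_HH o_def encc_def)
    also have "\<dots> = enc (dec a)" using Z cs val_mset[of cs] by (simp add: Fact_def)
    also have "\<dots> = a" using a by (metis carrier_HH_iff)
    finally show ?thesis by simp
  qed
  ultimately show "\<exists>es. set es \<subseteq> encc ` Codes C \<and> a = foldr (\<otimes>\<^bsub>HH C\<^esub>) es \<one>\<^bsub>HH C\<^esub>" by blast
qed

definition EE :: "nat multiset \<Rightarrow> nat \<Rightarrow> int" where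
  "EE m d = int (count m (2*d)) - int (count m (2*d+1))"

lemma EE_add[simp]: "EE (m + n) d = EE m d + EE n d" by (simp add: EE_def)

lemma nat_mod_eq_of_dvd: "int d dvd int a - int b \<Longrightarrow> a mod d = b mod d"
proof -
  assume "int d dvd int a - int b"
  hence "int a mod int d = int b mod int d" by (simp add: mod_eq_dvd_iff)
  thus ?thesis by (metis of_nat_mod of_nat_eq_iff)
qed

lemma dvd_of_nat_mod_eq: "a mod d = b mod d \<Longrightarrow> int d dvd int a - int b"
proof -
  assume "a mod d = b mod d"
  hence "int a mod int d = int b mod int d" by (metis of_nat_mod)
  thus ?thesis by (simp add: mod_eq_dvd_iff)
qed

lemma SS_dvd: "m \<in> SS C \<Longrightarrow> d \<in> C \<Longrightarrow> int d dvd EE m d"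
  unfolding EE_def by (rule dvd_of_nat_mod_eq) (auto simp: SS_def)

definition cinv :: "nat set \<Rightarrow> nat multiset \<times> nat multiset \<Rightarrow> nat \<Rightarrow> int" where
  "cinv C q = restrict (\<lambda>d. (EE (fst q) d - EE (snd q) d) mod int d) C"

lemma rel_imp:
  assumes "((x, y), (x', y')) \<in> class_rel (HH C) (PP C) dec" "d \<in> C"
  shows "(EE x d - EE y d) mod int d = (EE x' d - EE y' d) mod int d"
proof -
  obtain a b where ab: "a \<in> carrier (HH C)" "b \<in> carrier (HH C)" "x + y' + dec b = x' + y + dec a"
    using assms(1) unfolding class_rel_def by blast
  have "EE (x + y' + dec b) d = EE (x' + y + dec a) d" using ab(3) by simp
  hence e: "EE x d + EE y' d + EE (dec b) d = EE x' d + EE y d + EE (dec a) d" by simp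
  have "int d dvd EE (dec a) d" "int d dvd EE (dec b) d" using ab(1,2) assms(2) SS_dvd by (auto simp: carrier_HH_iff)
  hence "int d dvd EE (dec a) d - EE (dec b) d" by simp
  moreover have "EE (dec a) d - EE (dec b) d = (EE x d - EE y d) - (EE x' d - EE y' d)" using e by simp
  ultimately show ?thesis by (simp add: mod_eq_dvd_iff)
qed

lemma imp_rel:
  assumes fin: "finite C" and C2: "C \<subseteq> {2..}"
    and sets: "set_mset x \<subseteq> PP C" "set_mset y \<subseteq> PP C" "set_mset x' \<subseteq> PP C" "set_mset y' \<subseteq> PP C"
    and h: "\<forall>d\<in>C. (EE x d - EE y d) mod int d = (EE x' d - EE y' d) mod int d"
  shows "((x, y), (x', y')) \<in> class_rel (HH C) (PP C) dec"
proof -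
  define u where "u = x + y'"
  define v where "v = x' + y"
  define w where "w = fixY C u"
  have su: "set_mset u \<subseteq> PP C" and sv: "set_mset v \<subseteq> PP C" using sets by (auto simp: u_def v_def)
  have uw: "u + w \<in> SS C" unfolding w_def using compY_SS[OF su fin C2] .
  have vw: "v + w \<in> SS C"
  proof -
    have "set_mset (v + w) \<subseteq> PP C" using sv set_fixY by (auto simp: w_def)
    moreover have "\<forall>d\<in>C. count (v + w) (2*d) mod d = count (v + w) (2*d+1) mod d"
    proof
      fix d assume d: "d \<in> C"
      have w_e: "count w (2*d) = 0" by (simp add: w_def count_fixY_even)
      have "int d dvd EE (u + w) d" using SS_dvd[OF uw d] .
      hence 1: "int d dvd EE u d - int (count w (2*d+1))" using w_e by (simp add: EE_def algebra_simps)
      have "int d dvd (EE x d - EE y d) - (EE x' d - EE y' d)" using h d by (simp add: mod_eq_dvd_iff)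
      moreover have "(EE x d - EE y d) - (EE x' d - EE y' d) = EE u d - EE v d" by (simp add: u_def v_def)
      ultimately have 2: "int d dvd EE u d - EE v d" by simp
      have "int d dvd (EE u d - int (count w (2*d+1))) - (EE u d - EE v d)" using 1 2 by (rule dvd_diff)
      hence "int d dvd int (count (v + w) (2*d)) - int (count (v + w) (2*d+1))"
        using w_e by (simp add: EE_def algebra_simps)
      thus "count (v + w) (2*d) mod d = count (v + w) (2*d+1) mod d" by (rule nat_mod_eq_of_dvd)
    qed
    ultimately show ?thesis by (simp add: SS_def)
  qed
  have "enc (u + w) \<in> carrier (HH C)" "enc (v + w) \<in> carrier (HH C)" using uw vw by (auto simp: carrier_HH)
  moreover have "x + y' + dec (enc (v + w)) = x' + y + dec (enc (u + w))" by (simp add: u_def v_def ac_simps)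
  ultimately show ?thesis using sets unfolding class_rel_def by blast
qed

lemma finite_class_group:
  assumes fin: "finite C" and C2: "C \<subseteq> {2..}"
  shows "finite (class_group (HH C) (PP C) dec)"
proof -
  define Q where "Q = {(x, y). set_mset x \<subseteq> PP C \<and> set_mset y \<subseteq> PP C}"
  define R where "R = class_rel (HH C) (PP C) dec"
  have cls: "R `` {q} = {q' \<in> Q. cinv C q' = cinv C q}" if q: "q \<in> Q" for q
  proof -
    obtain x y where xy: "q = (x, y)" by (cases q)
    show ?thesis
    proof (rule subset_antisym; rule subsetI)
      fix q' assume "q' \<in> R `` {q}"
      hence r: "(q, q') \<in> R" by simp
      obtain x' y' where q': "q' = (x', y')" by (cases q')
      have "q' \<in> Q" using r unfolding R_def class_rel_def Q_def q' xy by auto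
      moreover have "cinv C q' = cinv C q"
        unfolding cinv_def using rel_imp[of x y x' y' C] r xy q' by (auto simp: R_def intro!: restrict_ext)
      ultimately show "q' \<in> {q' \<in> Q. cinv C q' = cinv C q}" by simp
    next
      fix q' assume q'Q: "q' \<in> {q' \<in> Q. cinv C q' = cinv C q}"
      obtain x' y' where q': "q' = (x', y')" by (cases q')
      have "\<forall>d\<in>C. (EE x d - EE y d) mod int d = (EE x' d - EE y' d) mod int d"
      proof
        fix d assume d: "d \<in> C"
        have "cinv C q' d = cinv C q d" using q'Q by simp
        thus "(EE x d - EE y d) mod int d = (EE x' d - EE y' d) mod int d"
          using d q' xy by (simp add: cinv_def)
      qed
      hence "(q, q') \<in> R" unfolding R_def xy q' using imp_rel[OF fin C2] q q'Q xy q' by (auto simp: Q_def)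
      thus "q' \<in> R `` {q}" by simp
    qed
  qed
  have "class_group (HH C) (PP C) dec \<subseteq> (\<lambda>r. {q' \<in> Q. cinv C q' = r}) ` (PiE C (\<lambda>d. {0..<int d}))"
  proof
    fix K assume "K \<in> class_group (HH C) (PP C) dec"
    then obtain q where q: "q \<in> Q" "K = R `` {q}" unfolding class_group_def quotient_def Q_def R_def by blast
    have "cinv C q \<in> PiE C (\<lambda>d. {0..<int d})"
      unfolding cinv_def using C2 by (auto simp: restrict_PiE_iff)
    thus "K \<in> (\<lambda>r. {q' \<in> Q. cinv C q' = r}) ` (PiE C (\<lambda>d. {0..<int d}))" using cls[OF q(1)] q(2) by blast
  qed
  moreover have "finite (PiE C (\<lambda>d. {0..<int d}))" using fin by (intro finite_PiE) auto
  ultimately show ?thesis using finite_subset by blast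
qed

theorem proposition3p2:
  fixes C :: "nat set"
  assumes "finite C" and "C \<noteq> {}" and "C \<subseteq> {2..}"
  shows "\<exists>(H :: nat monoid) (P :: nat set) (\<phi> :: nat \<Rightarrow> nat multiset).
           krull_monoid_via H P \<phi> \<and> finitely_generated H \<and> finite (class_group H P \<phi>) \<and>
           Rset H = C \<and> Ca H = C \<and> daleth_star H = C - {2}"
proof (intro exI conjI)
  show "krull_monoid_via (HH C) (PP C) dec"
    unfolding krull_monoid_via_def using HH_cancel divisor_theory_HH[OF assms(1,3)] by blast
  show "finitely_generated (HH C)" using fg_HH[OF assms(1,3)] .
  show "finite (class_group (HH C) (PP C) dec)" using finite_class_group[OF assms(1,3)] .
  show "Rset (HH C) = C" using Rset_HH[OF assms(3,1)] .
  show "Ca (HH C) = C" using Ca_HH[OF assms(3,1)] .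
  show "daleth_star (HH C) = C - {2}" using daleth_HH[OF assms(3,1)] .
qed

end
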